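(* Consider a finite Markov decision process with state space $\mathcal{S}$, action space $\mathcal{A}$ ($|\mathcal{S}\times\mathcal{A}|<\infty$), random rewards $r(s,a)$ with $\operatorname{Var}[r(s,a)]<\infty$ for all $s,a$, and discount factor $\gamma\in[0,1)$; let $Q^*$ be its optimal action-value function. Fix $K\in\{1,\dots,|\mathcal{A}|\}$. Two Q-functions $Q^A,Q^B$ are stored in lookup tables and updated simultaneously (action candidate based clipped Double Q-learning with simultaneous updating): at each step $t$, given experience $\langle s_t,a_t,r_t,s_{t+1}\rangle$, let $\mathcal{M}_K$ be the set of actions whose values are among the top $K$ values of $Q^B_t(s_{t+1},\cdot)$, $a_K^*=\arg\max_{a\in\mathcal{M}_K}Q^A_t(s_{t+1},a)$, $a^*=\arg\max_aQ^A_t(s_{t+1},a)$, set $$y_t=r_t+\gamma\min\{Q^B_t(s_{t+1},a_K^* ),Q^A_t(s_{t+1},a^* )\},$$ and update $Q^A_{t+1}(s_t,a_t)=Q^A_t(s_t,a_t)+\alpha_t(s_t,a_t)(y_t-Q^A_t(s_t,a_t))$ and $Q^B_{t+1}(s_t,a_t)=Q^B_t(s_t,a_t)+\alpha_t(s_t,a_t)(y_t-Q^B_t(s_t,a_t))$. Assume: (1) each state-action pair is sampled an infinite number of times; (2) both $Q^A$ and $Q^B$ receive an infinite number of updates; (3) the learning rates satisfy $\alpha_t(s,a)\in[0,1]$, $\sum_t\alpha_t(s,a)=\infty$, $\sum_t\alpha_t(s,a)^2<\infty$ with probability 1, and $\alpha_t(s,a)=0$ for all $(s,a)\neq(s_t,a_t)$.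 Then this algorithm converges to the optimal value function $Q^*$ with probability 1.
   Context: The optimal action-value function $Q^*$ satisfies the Bellman optimality equation $Q^*(s,a)=R(s,a)+\gamma\sum_{s'}\mathcal{P}_{sa}^{s'}\max_{a'}Q^*(s',a')$, where $R$ is the expected reward and $\mathcal{P}$ the transition probability. *)

theory Defs
  imports "HOL-Probability.Probability"
begin

text \<open>A finite MDP is given by a reward/transition kernel: for each state-action
pair (s,a), Kr s a is the joint law of (reward, next state).\<close>

definition exp_reward :: "('s \<Rightarrow> 'a \<Rightarrow> (real \<times> 's) measure) \<Rightarrow> 's \<Rightarrow> 'a \<Rightarrow> real" where
  "exp_reward Kr s a = (\<integral>x. fst x \<partial>(Kr s a))"

definition trans_prob :: "('s \<Rightarrow> 'a \<Rightarrow> (real \<times> 's) measure) \<Rightarrow> 's \<Rightarrow> 'a \<Rightarrow> 's \<Rightarrow> real" where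
  "trans_prob Kr s a s' = measure (Kr s a) (UNIV \<times> {s'})"

definition is_optimal_Q ::
  "('s::finite \<Rightarrow> 'a::finite \<Rightarrow> (real \<times> 's) measure) \<Rightarrow> real \<Rightarrow> ('s \<Rightarrow> 'a \<Rightarrow> real) \<Rightarrow> bool" where
  "is_optimal_Q Kr \<gamma> Q \<longleftrightarrow>
     (\<forall>s a. Q s a = exp_reward Kr s a + \<gamma> * (\<Sum>s'\<in>UNIV. trans_prob Kr s a s' * Max (range (Q s'))))"

definition topK :: "nat \<Rightarrow> ('a::finite \<Rightarrow> real) \<Rightarrow> 'a set" where
  "topK K f = {a. card {b. f a < f b} < K}"

text \<open>S t = s_t, A t = a_t, Rw t = r_t, S (Suc t) = s_{t+1}, \<alpha> t s a = learning rate,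
  aK t = the selected action a_K^* at step t (tie-breaking left to the process aK).\<close>
primrec acdq_tables ::
  "real \<Rightarrow> ('s \<Rightarrow> 'a::finite \<Rightarrow> real) \<Rightarrow> ('s \<Rightarrow> 'a \<Rightarrow> real) \<Rightarrow> (nat \<Rightarrow> 'w \<Rightarrow> 's)
   \<Rightarrow> (nat \<Rightarrow> 'w \<Rightarrow> real) \<Rightarrow> (nat \<Rightarrow> 's \<Rightarrow> 'a \<Rightarrow> 'w \<Rightarrow> real) \<Rightarrow> (nat \<Rightarrow> 'w \<Rightarrow> 'a)
   \<Rightarrow> nat \<Rightarrow> 'w \<Rightarrow> ('s \<Rightarrow> 'a \<Rightarrow> real) \<times> ('s \<Rightarrow> 'a \<Rightarrow> real)" where
  "acdq_tables \<gamma> QA0 QB0 S Rw \<alpha> aK 0 \<omega> = (QA0, QB0)"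
| "acdq_tables \<gamma> QA0 QB0 S Rw \<alpha> aK (Suc t) \<omega> =
    (let QA = fst (acdq_tables \<gamma> QA0 QB0 S Rw \<alpha> aK t \<omega>);
         QB = snd (acdq_tables \<gamma> QA0 QB0 S Rw \<alpha> aK t \<omega>);
         s' = S (Suc t) \<omega>;
         y = Rw t \<omega> + \<gamma> * min (QB s' (aK t \<omega>)) (Max (range (QA s')))
     in (\<lambda>s a. QA s a + \<alpha> t s a \<omega> * (y - QA s a),
         \<lambda>s a. QB s a + \<alpha> t s a \<omega> * (y - QB s a)))"

end

theory Submission
  imports Defs
begin

lemma prod_le_exp:
  fixes \<beta> :: "nat \<Rightarrow> real"
  assumes "\<And>k. 0 \<le> \<beta> k" "\<And>k. \<beta> k \<le> 1"
  shows "(\<Prod>k<n. (1 - \<beta> k)) \<le> exp (- (\<Sum>k<n. \<beta> k))"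
proof (induction n)
  case 0 then show ?case by simp
next
  case (Suc n)
  have p: "0 \<le> (\<Prod>k<n. (1 - \<beta> k))" using assms by (intro prod_nonneg) auto
  have e: "1 - \<beta> n \<le> exp (- \<beta> n)" using exp_ge_add_one_self[of "- \<beta> n"] by simp
  have "(\<Prod>k<Suc n. (1 - \<beta> k)) = (\<Prod>k<n. (1 - \<beta> k)) * (1 - \<beta> n)" by simp
  also have "\<dots> \<le> exp (- (\<Sum>k<n. \<beta> k)) * exp (- \<beta> n)"
    using Suc p e assms by (intro mult_mono) auto
  also have "\<dots> = exp (- (\<Sum>k<Suc n. \<beta> k))" by (simp add: exp_add[symmetric])
  finally show ?case .
qed

lemma nonsummable_exp_lim:
  fixes \<beta> :: "nat \<Rightarrow> real"
  assumes "\<And>k. 0 \<le> \<beta> k" "\<not> summable \<beta>"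
  shows "(\<lambda>n. exp (- (\<Sum>k<n. \<beta> k))) \<longlonglongrightarrow> 0"
proof -
  have "filterlim (\<lambda>n. \<Sum>k<n. \<beta> k) at_top sequentially"
  proof (subst filterlim_at_top, intro allI)
    fix Z :: real
    obtain n where n: "Z < (\<Sum>k<n. \<beta> k)"
      using assms summableI_nonneg_bounded[of \<beta> Z] by (meson not_le)
    have "\<forall>m\<ge>n. Z \<le> (\<Sum>k<m. \<beta> k)"
    proof (intro allI impI)
      fix m assume "n \<le> m"
      then have "(\<Sum>k<n. \<beta> k) \<le> (\<Sum>k<m. \<beta> k)"
        using assms by (intro sum_mono2) auto
      then show "Z \<le> (\<Sum>k<m. \<beta> k)" using n by simp
    qed
    then show "eventually (\<lambda>m. Z \<le> (\<Sum>k<m. \<beta> k)) sequentially"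
      by (auto simp: eventually_sequentially)
  qed
  then have "filterlim (\<lambda>n. - (\<Sum>k<n. \<beta> k)) at_bot sequentially"
    by (simp add: filterlim_uminus_at_top)
  then show ?thesis by (rule filterlim_compose[OF exp_at_bot])
qed

lemma ld_bound:
  fixes \<beta> x :: "nat \<Rightarrow> real"
  assumes b0: "\<And>t. 0 \<le> \<beta> t" and b1: "\<And>t. \<beta> t \<le> 1" and ns: "\<not> summable \<beta>"
    and rec: "\<And>t. t \<ge> T \<Longrightarrow> x (Suc t) \<le> (1 - \<beta> t) * x t + \<beta> t * c"
    and d: "\<delta> > 0"
  shows "eventually (\<lambda>t. x t \<le> c + \<delta>) sequentially"
proof -
  define y where "y t = max (x t - c) 0" for t
  have ystep: "y (Suc t) \<le> (1 - \<beta> t) * y t" if "t \<ge> T" for t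
  proof -
    have "x (Suc t) - c \<le> (1 - \<beta> t) * (x t - c)" using rec[OF that] by (simp add: algebra_simps)
    also have "\<dots> \<le> (1 - \<beta> t) * y t" using b1[of t] by (intro mult_left_mono) (auto simp: y_def)
    finally show ?thesis using b1[of t] by (auto simp: y_def intro: mult_nonneg_nonneg)
  qed
  have yb: "y (T + n) \<le> y T * (\<Prod>k<n. (1 - \<beta> (T + k)))" for n
  proof (induction n)
    case 0 then show ?case by simp
  next
    case (Suc n)
    have "y (T + Suc n) \<le> (1 - \<beta> (T + n)) * y (T + n)" using ystep[of "T+n"] by simp
    also have "\<dots> \<le> (1 - \<beta> (T + n)) * (y T * (\<Prod>k<n. (1 - \<beta> (T + k))))"
      using Suc b1[of "T+n"] by (intro mult_left_mono) auto
    also have "\<dots> = y T * (\<Prod>k<Suc n. (1 - \<beta> (T + k)))" by (simp add: algebra_simps)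
    finally show ?case .
  qed
  have yT: "0 \<le> y T" by (simp add: y_def)
  have ns': "\<not> summable (\<lambda>k. \<beta> (k + T))" using ns summable_iff_shift[of \<beta> T] by simp
  have lim: "(\<lambda>n. y T * exp (- (\<Sum>k<n. \<beta> (T + k)))) \<longlonglongrightarrow> 0"
    using tendsto_mult_right_zero[OF nonsummable_exp_lim[of "\<lambda>k. \<beta> (T + k)"]] b0 ns'
    by (simp add: add.commute)
  have "eventually (\<lambda>n. y T * exp (- (\<Sum>k<n. \<beta> (T + k))) < \<delta>) sequentially"
    using order_tendstoD(2)[OF lim d] .
  then obtain N where N: "\<And>n. n \<ge> N \<Longrightarrow> y T * exp (- (\<Sum>k<n. \<beta> (T + k))) < \<delta>"
    by (auto simp: eventually_sequentially)
  have "x t \<le> c + \<delta>" if "t \<ge> T + N" for t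
  proof -
    define n where "n = t - T"
    have tn: "t = T + n" "n \<ge> N" using that by (auto simp: n_def)
    have "y t \<le> y T * (\<Prod>k<n. (1 - \<beta> (T + k)))" using yb tn by simp
    also have "\<dots> \<le> y T * exp (- (\<Sum>k<n. \<beta> (T + k)))"
      using yT prod_le_exp[of "\<lambda>k. \<beta> (T + k)" n] b0 b1 by (intro mult_left_mono) auto
    also have "\<dots> < \<delta>" using N tn by simp
    finally show ?thesis by (simp add: y_def)
  qed
  then show ?thesis by (auto simp: eventually_sequentially)
qed

lemma ld_zero:
  fixes \<beta> x r :: "nat \<Rightarrow> real"
  assumes b0: "\<And>t. 0 \<le> \<beta> t" and b1: "\<And>t. \<beta> t \<le> 1" and ns: "\<not> summable \<beta>"
    and rec: "\<And>t. x (Suc t) = (1 - \<beta> t) * x t + \<beta> t * r t"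
    and r: "r \<longlonglongrightarrow> 0"
  shows "x \<longlonglongrightarrow> 0"
proof (rule tendstoI)
  fix e :: real assume e: "0 < e"
  have "\<forall>\<epsilon>>0. eventually (\<lambda>t. dist (r t) 0 < \<epsilon>) sequentially" using r
    by (simp add: tendsto_iff)
  then have "eventually (\<lambda>t. dist (r t) 0 < e/2) sequentially" using e half_gt_zero by blast
  then obtain T where T: "\<And>t. t \<ge> T \<Longrightarrow> \<bar>r t\<bar> < e/2" by (auto simp: eventually_sequentially)
  have "\<bar>x (Suc t)\<bar> \<le> (1 - \<beta> t) * \<bar>x t\<bar> + \<beta> t * (e/2)" if "t \<ge> T" for t
  proof -
    have "\<bar>x (Suc t)\<bar> \<le> \<bar>(1 - \<beta> t) * x t\<bar> + \<bar>\<beta> t * r t\<bar>" using rec[of t] by simp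
    also have "\<dots> = (1 - \<beta> t) * \<bar>x t\<bar> + \<beta> t * \<bar>r t\<bar>" using b0[of t] b1[of t] by (simp add: abs_mult)
    also have "\<dots> \<le> (1 - \<beta> t) * \<bar>x t\<bar> + \<beta> t * (e/2)"
      using T[OF that] b0[of t] by (intro add_left_mono mult_left_mono) auto
    finally show ?thesis .
  qed
  from ld_bound[of \<beta> T "\<lambda>t. \<bar>x t\<bar>" "e/2" "e/4", OF b0 b1 ns this] e
  have "eventually (\<lambda>t. \<bar>x t\<bar> \<le> e/2 + e/4) sequentially" by simp
  then show "eventually (\<lambda>t. dist (x t) 0 < e) sequentially"
    by (rule eventually_mono) (use e in auto)
qed

primrec acc :: "(nat \<Rightarrow> real) \<Rightarrow> (nat \<Rightarrow> real) \<Rightarrow> nat \<Rightarrow> real" where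
  "acc \<beta> w 0 = 0"
| "acc \<beta> w (Suc t) = (1 - \<beta> t) * acc \<beta> w t + \<beta> t * w t"

lemma acc_kronecker:
  fixes \<beta> w :: "nat \<Rightarrow> real"
  assumes b0: "\<And>t. 0 \<le> \<beta> t" and b1: "\<And>t. \<beta> t \<le> 1" and ns: "\<not> summable \<beta>"
    and s: "summable (\<lambda>t. \<beta> t * w t)"
  shows "acc \<beta> w \<longlonglongrightarrow> 0"
proof -
  define R where "R t = (\<Sum>k. \<beta> (k + t) * w (k + t))" for t
  have R0: "R \<longlonglongrightarrow> 0" unfolding R_def using suminf_exist_split2[OF s] by simp
  have Rs: "R t = \<beta> t * w t + R (Suc t)" for t
  proof -
    have st: "summable (\<lambda>k. \<beta> (k + t) * w (k + t))"
      using summable_iff_shift[of "\<lambda>t. \<beta> t * w t" t] s by simp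
    have "(\<Sum>k. \<beta> (Suc k + t) * w (Suc k + t)) = R t - \<beta> t * w t"
      unfolding R_def using suminf_split_head[OF st] by simp
    moreover have "R (Suc t) = (\<Sum>k. \<beta> (Suc k + t) * w (Suc k + t))"
      unfolding R_def by simp
    ultimately show ?thesis by simp
  qed
  define X where "X t = acc \<beta> w t + R t" for t
  have "X (Suc t) = (1 - \<beta> t) * X t + \<beta> t * R t" for t
    unfolding X_def using Rs[of t] by (simp add: algebra_simps)
  then have "X \<longlonglongrightarrow> 0" using ld_zero[OF b0 b1 ns _ R0] by blast
  then have "(\<lambda>t. X t - R t) \<longlonglongrightarrow> 0 - 0" using R0 by (intro tendsto_diff)
  then show ?thesis by (simp add: X_def)
qed

lemma Max_range_ge: "f x \<le> Max (range (f::'a::finite \<Rightarrow> real))"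
  by (rule Max_ge) auto

lemma Max_range_in: obtains x where "Max (range (f::'a::finite \<Rightarrow> real)) = f x"
proof -
  have "Max (range f) \<in> range f" by (rule Max_in) auto
  then obtain x where "Max (range f) = f x" by (meson imageE)
  then show thesis by (rule that)
qed

lemma Max_range_diff:
  fixes f g :: "'a::finite \<Rightarrow> real"
  assumes "\<And>a. \<bar>f a - g a\<bar> \<le> d"
  shows "\<bar>Max (range f) - Max (range g)\<bar> \<le> d"
proof -
  obtain x where x: "Max (range f) = f x" by (rule Max_range_in)
  obtain y where y: "Max (range g) = g y" by (rule Max_range_in)
  have "f x \<le> g x + d" using assms[of x] by simp
  also have "g x \<le> g y" using Max_range_ge[of g x] y by simp
  finally have 1: "f x \<le> g y + d" by simp
  have "g y \<le> f y + d" using assms[of y] by simp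
  also have "f y \<le> f x" using Max_range_ge[of f y] x by simp
  finally have 2: "g y \<le> f x + d" by simp
  show ?thesis using 1 2 x y by simp
qed

lemma Max_range_abs:
  fixes f :: "'a::finite \<Rightarrow> real"
  assumes "\<And>a. \<bar>f a\<bar> \<le> L"
  shows "\<bar>Max (range f)\<bar> \<le> L"
proof -
  obtain x where "Max (range f) = f x" by (rule Max_range_in)
  then show ?thesis using assms by simp
qed

lemma topK_max:
  fixes g :: "'a::finite \<Rightarrow> real"
  assumes "1 \<le> K" "Max (range g) = g b"
  shows "b \<in> topK K g"
proof -
  have "{c. g b < g c} = {}" using Max_range_ge[of g] assms(2) by (auto simp: not_less)
  then show ?thesis using assms(1) by (simp add: topK_def)
qed

lemma min_clip:
  fixes f g :: "'a::finite \<Rightarrow> real"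
  assumes K: "1 \<le> K" and d: "\<And>b. \<bar>f b - g b\<bar> \<le> d"
    and k: "k \<in> topK K g" and sel: "\<forall>b\<in>topK K g. f b \<le> f k"
  shows "Max (range f) - 3 * d \<le> min (g k) (Max (range f)) \<and> min (g k) (Max (range f)) \<le> Max (range f)"
proof -
  obtain b where b: "Max (range g) = g b" by (rule Max_range_in)
  have bK: "b \<in> topK K g" by (rule topK_max[OF K b])
  have "g k \<ge> f k - d" using d[of k] by simp
  moreover have "f k \<ge> f b" using sel bK by simp
  moreover have "f b \<ge> g b - d" using d[of b] by simp
  moreover have "\<bar>Max (range f) - Max (range g)\<bar> \<le> d" using Max_range_diff[of f g d] d by simp
  ultimately have "g k \<ge> Max (range f) - 3 * d" using b by simp
  then show ?thesis using d[of k] by simp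
qed

definition clip :: "real \<Rightarrow> real \<Rightarrow> real" where "clip N x = max (- N) (min N x)"

lemma convex_abs_le:
  fixes a X Y L :: real
  assumes "0 \<le> a" "a \<le> 1" "\<bar>X\<bar> \<le> L" "\<bar>Y\<bar> \<le> L"
  shows "\<bar>(1 - a) * X + a * Y\<bar> \<le> L"
proof -
  have "\<bar>(1 - a) * X + a * Y\<bar> \<le> \<bar>(1 - a) * X\<bar> + \<bar>a * Y\<bar>" by (rule abs_triangle_ineq)
  also have "\<dots> = (1 - a) * \<bar>X\<bar> + a * \<bar>Y\<bar>" using assms by (simp add: abs_mult)
  also have "\<dots> \<le> (1 - a) * L + a * L" using assms by (intro add_mono mult_left_mono) auto
  finally show ?thesis by (simp add: algebra_simps)
qed

lemma abs_tri_le: "\<bar>x - u\<bar> \<le> L \<Longrightarrow> \<bar>u\<bar> \<le> U \<Longrightarrow> \<bar>x::real\<bar> \<le> L + U" by arith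

lemma rho_eq: "(\<gamma>::real) * Dv + (1 - \<gamma>) * Dv / 2 = Dv * ((1 + \<gamma>) / 2)" by (simp add: field_simps)
lemma rho_eq2: "Dv = B0 * \<rho> ^ m \<Longrightarrow> Dv * \<rho> = B0 * (\<rho>::real) ^ Suc m" by (simp add: mult.assoc mult.commute)

lemma key_id:
  fixes p X Y :: "'s::finite \<Rightarrow> real"
  shows "(r + \<gamma> * m) - (R + \<gamma> * (\<Sum>s\<in>UNIV. p s * Y s)) - (r - R) - \<gamma> * (X1 - (\<Sum>s\<in>UNIV. p s * X s)) - \<gamma> * (m - X1)
    = \<gamma> * (\<Sum>s\<in>UNIV. p s * (X s - Y s))"
  by (simp add: algebra_simps sum_subtractf)

lemma zrec_id:
  fixes q al yy qs u uu vv vi ee ei :: real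
  shows "(q + al*(yy - q)) - qs - ((1-al)* u + al*uu) - ((1-al) * vv + al * vi) - ((1-al)*ee + al*ei)
    = (1-al)*(q - qs - u - vv - ee) + al*(yy - qs - uu - vi - ei)"
  by (simp add: algebra_simps)

lemma le_sum2:
  fixes f :: "'s::finite \<Rightarrow> 'a::finite \<Rightarrow> real"
  assumes "\<And>s a. 0 \<le> f s a"
  shows "f s a \<le> (\<Sum>s\<in>UNIV. \<Sum>a\<in>UNIV. f s a)"
proof -
  have "f s a \<le> (\<Sum>a'\<in>UNIV. f s a')" by (rule member_le_sum) (auto simp: assms)
  also have "\<dots> \<le> (\<Sum>s\<in>UNIV. \<Sum>a\<in>UNIV. f s a)"
    by (rule member_le_sum[of s UNIV "\<lambda>s. \<Sum>a\<in>UNIV. f s a"]) (auto intro: sum_nonneg assms)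
  finally show ?thesis .
qed

lemma sumP_abs:
  fixes P x :: "'s::finite \<Rightarrow> real"
  assumes "\<And>s. 0 \<le> P s" "(\<Sum>s\<in>UNIV. P s) = 1" "\<And>s. \<bar>x s\<bar> \<le> D"
  shows "\<bar>\<Sum>s\<in>UNIV. P s * x s\<bar> \<le> D"
proof -
  have "\<bar>\<Sum>s\<in>UNIV. P s * x s\<bar> \<le> (\<Sum>s\<in>UNIV. \<bar>P s * x s\<bar>)" by (rule sum_abs)
  also have "\<dots> \<le> (\<Sum>s\<in>UNIV. P s * D)"
    using assms by (intro sum_mono) (simp add: abs_mult mult_left_mono)
  also have "\<dots> = D" using assms(2) by (simp add: sum_distrib_right[symmetric])
  finally show ?thesis .
qed

lemma pathwise:
  fixes QA QB :: "nat \<Rightarrow> 's::finite \<Rightarrow> 'a::finite \<Rightarrow> real"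
    and \<alpha> :: "nat \<Rightarrow> 's \<Rightarrow> 'a \<Rightarrow> real"
    and S :: "nat \<Rightarrow> 's" and A :: "nat \<Rightarrow> 'a" and r y :: "nat \<Rightarrow> real" and k :: "nat \<Rightarrow> 'a"
    and R Qs :: "'s \<Rightarrow> 'a \<Rightarrow> real" and P :: "'s \<Rightarrow> 'a \<Rightarrow> 's \<Rightarrow> real"
  assumes g0: "0 \<le> \<gamma>" and g1: "\<gamma> < 1" and K: "1 \<le> K"
    and a0: "\<And>t s a. 0 \<le> \<alpha> t s a" and a1: "\<And>t s a. \<alpha> t s a \<le> 1"
    and az: "\<And>t s a. (s, a) \<noteq> (S t, A t) \<Longrightarrow> \<alpha> t s a = 0"
    and ans: "\<And>s a. \<not> summable (\<lambda>t. \<alpha> t s a)"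
    and y_def: "\<And>t. y t = r t + \<gamma> * min (QB t (S (Suc t)) (k t)) (Max (range (QA t (S (Suc t)))))"
    and updA: "\<And>t s a. QA (Suc t) s a = QA t s a + \<alpha> t s a * (y t - QA t s a)"
    and updB: "\<And>t s a. QB (Suc t) s a = QB t s a + \<alpha> t s a * (y t - QB t s a)"
    and selK: "\<And>t. k t \<in> topK K (QB t (S (Suc t)))"
    and selA: "\<And>t. \<forall>b\<in>topK K (QB t (S (Suc t))). QA t (S (Suc t)) b \<le> QA t (S (Suc t)) (k t)"
    and P0: "\<And>s a s'. 0 \<le> P s a s'" and P1: "\<And>s a. (\<Sum>s'\<in>UNIV. P s a s') = 1"
    and Qs: "\<And>s a. Qs s a = R s a + \<gamma> * (\<Sum>s'\<in>UNIV. P s a s' * Max (range (Qs s')))"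
    and U: "\<And>s a. acc (\<lambda>t. \<alpha> t s a) (\<lambda>t. r t - R (S t) (A t)) \<longlonglongrightarrow> 0"
    and V: "\<And>(N::nat) s a. acc (\<lambda>t. \<alpha> t s a) (\<lambda>t. \<gamma> * (clip N (Max (range (QA t (S (Suc t)))))
              - (\<Sum>s'\<in>UNIV. P (S t) (A t) s' * clip N (Max (range (QA t s')))))) \<longlonglongrightarrow> 0"
  shows "(\<lambda>t. QA t s a) \<longlonglongrightarrow> Qs s a \<and> (\<lambda>t. QB t s a) \<longlonglongrightarrow> Qs s a"
proof -
  define D where "D t s a = QA t s a - QB t s a" for t s a
  have D0: "(\<lambda>t. D t s a) \<longlonglongrightarrow> 0" for s a
  proof (rule ld_zero[of "\<lambda>t. \<alpha> t s a" _ "\<lambda>_. 0"])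
    show "D (Suc t) s a = (1 - \<alpha> t s a) * D t s a + \<alpha> t s a * 0" for t
      by (simp add: D_def updA updB algebra_simps)
  qed (use a0 a1 ans in auto)
  define dd where "dd t = (\<Sum>s\<in>UNIV. \<Sum>a\<in>UNIV. \<bar>D t s a\<bar>)" for t
  have dd0: "dd \<longlonglongrightarrow> 0"
  proof -
    have "(\<lambda>t. \<Sum>s\<in>UNIV. \<Sum>a\<in>UNIV. \<bar>D t s a\<bar>) \<longlonglongrightarrow> (\<Sum>s\<in>(UNIV::'s set). \<Sum>a\<in>(UNIV::'a set). 0)"
      by (intro tendsto_sum tendsto_rabs_zero D0)
    then show ?thesis unfolding dd_def[abs_def] by simp
  qed
  have Dle: "\<bar>D t s a\<bar> \<le> dd t" for t s a
    unfolding dd_def by (rule le_sum2[of "\<lambda>s a. \<bar>D t s a\<bar>"]) auto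
  define e where "e t = \<gamma> * (min (QB t (S (Suc t)) (k t)) (Max (range (QA t (S (Suc t)))))
      - Max (range (QA t (S (Suc t)))))" for t
  have ebound: "\<bar>e t\<bar> \<le> 3 * dd t" for t
  proof -
    have "\<bar>QA t (S (Suc t)) b - QB t (S (Suc t)) b\<bar> \<le> dd t" for b using Dle[of t] by (simp add: D_def)
    from min_clip[OF K this selK selA]
    have h: "\<bar>min (QB t (S (Suc t)) (k t)) (Max (range (QA t (S (Suc t))))) - Max (range (QA t (S (Suc t))))\<bar> \<le> 3 * dd t"
      by linarith
    have "\<bar>e t\<bar> \<le> 1 * \<bar>min (QB t (S (Suc t)) (k t)) (Max (range (QA t (S (Suc t))))) - Max (range (QA t (S (Suc t))))\<bar>"
      unfolding e_def abs_mult using g0 g1 by (intro mult_right_mono) auto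
    then show ?thesis using h by simp
  qed
  have e0: "e \<longlonglongrightarrow> 0"
    by (rule Lim_null_comparison[of _ "\<lambda>t. 3 * dd t"]) (use ebound tendsto_mult_right_zero[OF dd0] in auto)
  define Ua where "Ua t s a = acc (\<lambda>t. \<alpha> t s a) (\<lambda>t. r t - R (S t) (A t)) t" for t s a
  define Ea where "Ea t s a = acc (\<lambda>t. \<alpha> t s a) e t" for t s a
  have Ea0: "(\<lambda>t. Ea t s a) \<longlonglongrightarrow> 0" for s a
    unfolding Ea_def by (rule ld_zero[OF _ _ _ _ e0]) (use a0 a1 ans in auto)
  have "\<forall>s a. \<exists>B. \<forall>t. \<bar>Ua t s a\<bar> \<le> B"
  proof (intro allI)
    fix s a
    have "Bseq (\<lambda>t. Ua t s a)" unfolding Ua_def using U convergent_imp_Bseq convergentI by blast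
    then show "\<exists>B. \<forall>t. \<bar>Ua t s a\<bar> \<le> B" by (auto simp: Bseq_def)
  qed
  then obtain Bf where Bf: "\<And>t s a. \<bar>Ua t s a\<bar> \<le> Bf s a" by metis
  define Ub where "Ub = (\<Sum>s\<in>UNIV. \<Sum>a\<in>UNIV. \<bar>Bf s a\<bar>)"
  have Ub: "\<bar>Ua t s a\<bar> \<le> Ub" for t s a
    using Bf[of t s a] le_sum2[of "\<lambda>s a. \<bar>Bf s a\<bar>" s a] unfolding Ub_def by auto
  define Rm where "Rm = (\<Sum>s\<in>UNIV. \<Sum>a\<in>UNIV. \<bar>R s a\<bar>)"
  have Rm: "\<bar>R s a\<bar> \<le> Rm" for s a unfolding Rm_def by (rule le_sum2[of "\<lambda>s a. \<bar>R s a\<bar>"]) auto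
  define L0 where "L0 = (\<Sum>s\<in>UNIV. \<Sum>a\<in>UNIV. \<bar>QA 0 s a\<bar> + \<bar>QB 0 s a\<bar>)"
  have L0: "\<bar>QA 0 s a\<bar> + \<bar>QB 0 s a\<bar> \<le> L0" for s a
    unfolding L0_def by (rule le_sum2[of "\<lambda>s a. \<bar>QA 0 s a\<bar> + \<bar>QB 0 s a\<bar>"]) auto
  define L where "L = max L0 ((Rm + \<gamma> * Ub) / (1 - \<gamma>))"
  have LR: "Rm + \<gamma> * (L + Ub) \<le> L"
  proof -
    have "(Rm + \<gamma> * Ub) / (1 - \<gamma>) \<le> L" by (simp add: L_def)
    then have "Rm + \<gamma> * Ub \<le> L * (1 - \<gamma>)" using g1 by (simp add: pos_divide_le_eq)
    then show ?thesis by (simp add: algebra_simps)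
  qed
  have inv: "\<forall>s a. \<bar>QA t s a - Ua t s a\<bar> \<le> L \<and> \<bar>QB t s a - Ua t s a\<bar> \<le> L" for t
  proof (induction t)
    case 0
    show ?case
    proof (intro allI conjI)
      fix s a
      have "L0 \<le> L" by (simp add: L_def)
      then show "\<bar>QA 0 s a - Ua 0 s a\<bar> \<le> L" "\<bar>QB 0 s a - Ua 0 s a\<bar> \<le> L"
        using L0[of s a] by (auto simp: Ua_def)
    qed
  next
    case (Suc t)
    have QAb: "\<bar>QA t s a\<bar> \<le> L + Ub" for s a using Suc Ub[of t s a] abs_tri_le[of "QA t s a" "Ua t s a" L Ub] by blast
    have QBb: "\<bar>QB t s a\<bar> \<le> L + Ub" for s a using Suc Ub[of t s a] abs_tri_le[of "QB t s a" "Ua t s a" L Ub] by blast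
    define m where "m = min (QB t (S (Suc t)) (k t)) (Max (range (QA t (S (Suc t)))))"
    have "\<bar>Max (range (QA t (S (Suc t))))\<bar> \<le> L + Ub" by (rule Max_range_abs) (use QAb in auto)
    then have mb: "\<bar>m\<bar> \<le> L + Ub" using QBb[of "S (Suc t)" "k t"] unfolding m_def by linarith
    have Yb: "\<bar>R (S t) (A t) + \<gamma> * m\<bar> \<le> L"
    proof -
      have "\<bar>R (S t) (A t) + \<gamma> * m\<bar> \<le> \<bar>R (S t) (A t)\<bar> + \<gamma> * \<bar>m\<bar>" 
        using abs_triangle_ineq[of "R (S t) (A t)" "\<gamma> * m"] g0 by (simp add: abs_mult)
      also have "\<dots> \<le> Rm + \<gamma> * (L + Ub)" using Rm mb g0 by (intro add_mono mult_left_mono) auto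
      finally show ?thesis using LR by simp
    qed
    have yu: "y t - (r t - R (S t) (A t)) = R (S t) (A t) + \<gamma> * m" by (simp add: y_def m_def)
    show ?case
    proof (intro allI conjI)
      fix s a
      have "QA (Suc t) s a - Ua (Suc t) s a = (1 - \<alpha> t s a) * (QA t s a - Ua t s a) + \<alpha> t s a * (R (S t) (A t) + \<gamma> * m)"
        using yu by (simp add: updA Ua_def algebra_simps)
      then show "\<bar>QA (Suc t) s a - Ua (Suc t) s a\<bar> \<le> L" using convex_abs_le[OF a0 a1 _ Yb] Suc by auto
      have "QB (Suc t) s a - Ua (Suc t) s a = (1 - \<alpha> t s a) * (QB t s a - Ua t s a) + \<alpha> t s a * (R (S t) (A t) + \<gamma> * m)"
        using yu by (simp add: updB Ua_def algebra_simps)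
      then show "\<bar>QB (Suc t) s a - Ua (Suc t) s a\<bar> \<le> L" using convex_abs_le[OF a0 a1 _ Yb] Suc by auto
    qed
  qed
  define LL where "LL = L + Ub"
  have QAb: "\<bar>QA t s a\<bar> \<le> LL" for t s a using inv[of t] Ub[of t s a] abs_tri_le[of "QA t s a" "Ua t s a" L Ub] unfolding LL_def by blast
  obtain N0 :: nat where N0: "LL \<le> real N0" using real_arch_simple by blast
  have clipeq: "clip (real N0) (Max (range (QA t s'))) = Max (range (QA t s'))" for t s'
  proof -
    have "\<bar>Max (range (QA t s'))\<bar> \<le> LL" by (rule Max_range_abs) (use QAb in auto)
    then show ?thesis using N0 by (simp add: clip_def)
  qed
  define v where "v t = \<gamma> * (Max (range (QA t (S (Suc t)))) - (\<Sum>s'\<in>UNIV. P (S t) (A t) s' * Max (range (QA t s'))))" for t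
  define Va where "Va t s a = acc (\<lambda>t. \<alpha> t s a) v t" for t s a
  have Va0: "(\<lambda>t. Va t s a) \<longlonglongrightarrow> 0" for s a
    using V[of s a N0] unfolding Va_def v_def clipeq .
  define G where "G t = \<gamma> * (\<Sum>s'\<in>UNIV. P (S t) (A t) s' * (Max (range (QA t s')) - Max (range (Qs s'))))" for t
  define z where "z t s a = QA t s a - Qs s a - Ua t s a - Va t s a - Ea t s a" for t s a
  have key: "\<alpha> t s a * (y t - Qs s a - (r t - R (S t) (A t)) - v t - e t) = \<alpha> t s a * G t" for t s a
  proof (cases "\<alpha> t s a = 0")
    case True then show ?thesis by simp
  next
    case False
    then have sa: "s = S t" "a = A t" using az by blast+
    have Qsa: "Qs (S t) (A t) = R (S t) (A t) + \<gamma> * (\<Sum>s'\<in>UNIV. P (S t) (A t) s' * Max (range (Qs s')))"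
      by (rule Qs)
    have "y t - Qs s a - (r t - R (S t) (A t)) - v t - e t = G t"
      unfolding sa y_def v_def e_def G_def Qsa by (rule key_id)
    then show ?thesis by simp
  qed
  have zrec: "z (Suc t) s a = (1 - \<alpha> t s a) * z t s a + \<alpha> t s a * G t" for t s a
  proof -
    have "z (Suc t) s a = (QA t s a + \<alpha> t s a * (y t - QA t s a)) - Qs s a
       - ((1 - \<alpha> t s a) * Ua t s a + \<alpha> t s a * (r t - R (S t) (A t)))
       - ((1 - \<alpha> t s a) * Va t s a + \<alpha> t s a * v t) - ((1 - \<alpha> t s a) * Ea t s a + \<alpha> t s a * e t)"
      by (simp add: z_def updA Ua_def Va_def Ea_def)
    also have "\<dots> = (1 - \<alpha> t s a) * z t s a + \<alpha> t s a * (y t - Qs s a - (r t - R (S t) (A t)) - v t - e t)"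
      unfolding z_def by (rule zrec_id)
    finally have "z (Suc t) s a = (1 - \<alpha> t s a) * z t s a + \<alpha> t s a * (y t - Qs s a - (r t - R (S t) (A t)) - v t - e t)" .
    then show ?thesis using key[of t s a] by simp
  qed
  have Gb: "\<bar>G t\<bar> \<le> \<gamma> * Dv" if "\<And>s a. \<bar>QA t s a - Qs s a\<bar> \<le> Dv" for t Dv
  proof -
    have "\<bar>\<Sum>s'\<in>UNIV. P (S t) (A t) s' * (Max (range (QA t s')) - Max (range (Qs s')))\<bar> \<le> Dv"
      by (rule sumP_abs) (use P0 P1 Max_range_diff[of "QA t _" "Qs _" Dv] that in auto)
    then show ?thesis unfolding G_def abs_mult using g0 by (simp add: mult_left_mono)
  qed
  have W0: "(\<lambda>t. Ua t s a + Va t s a + Ea t s a) \<longlonglongrightarrow> 0" for s a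
    using tendsto_add[OF tendsto_add[OF U[of s a] Va0[of s a]] Ea0[of s a]] unfolding Ua_def by simp
  define \<rho> where "\<rho> = (1 + \<gamma>) / 2"
  have \<rho>: "0 \<le> \<rho>" "\<rho> < 1" using g0 g1 by (auto simp: \<rho>_def)
  define Qm where "Qm = (\<Sum>s\<in>UNIV. \<Sum>a\<in>UNIV. \<bar>Qs s a\<bar>)"
  have Qm: "\<bar>Qs s a\<bar> \<le> Qm" for s a unfolding Qm_def by (rule le_sum2[of "\<lambda>s a. \<bar>Qs s a\<bar>"]) auto
  define B0 where "B0 = LL + Qm + 1"
  have B0: "0 < B0" using QAb[of 0 undefined undefined] Qm[of undefined undefined] unfolding B0_def by linarith
  have contr: "eventually (\<lambda>t. \<forall>s a. \<bar>QA t s a - Qs s a\<bar> \<le> B0 * \<rho> ^ m) sequentially" for m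
  proof (induction m)
    case 0
    have "\<bar>QA t s a - Qs s a\<bar> \<le> B0" for t s a using QAb[of t s a] Qm[of s a] unfolding B0_def by linarith
    then show ?case by simp
  next
    case (Suc m)
    define Dv where "Dv = B0 * \<rho> ^ m"
    have Dv: "0 < Dv" using B0 \<rho> g0 by (auto simp: Dv_def \<rho>_def)
    from Suc obtain T where T: "\<And>t s a. t \<ge> T \<Longrightarrow> \<bar>QA t s a - Qs s a\<bar> \<le> Dv"
      unfolding Dv_def eventually_sequentially by blast
    have "eventually (\<lambda>t. \<bar>QA t s a - Qs s a\<bar> \<le> B0 * \<rho> ^ Suc m) sequentially" for s a
    proof -
      have zb: "\<bar>z (Suc t) s a\<bar> \<le> (1 - \<alpha> t s a) * \<bar>z t s a\<bar> + \<alpha> t s a * (\<gamma> * Dv)" if "t \<ge> T" for t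
      proof -
        have "\<bar>z (Suc t) s a\<bar> \<le> \<bar>(1 - \<alpha> t s a) * z t s a\<bar> + \<bar>\<alpha> t s a * G t\<bar>"
          unfolding zrec by (rule abs_triangle_ineq)
        also have "\<dots> = (1 - \<alpha> t s a) * \<bar>z t s a\<bar> + \<alpha> t s a * \<bar>G t\<bar>"
          using a0[of t s a] a1[of t s a] by (simp add: abs_mult)
        also have "\<dots> \<le> (1 - \<alpha> t s a) * \<bar>z t s a\<bar> + \<alpha> t s a * (\<gamma> * Dv)"
          using Gb[of t Dv] T[OF that] a0[of t s a] by (intro add_left_mono mult_left_mono) auto
        finally show ?thesis .
      qed
      have dpos: "(1 - \<gamma>) * Dv / 4 > 0" using g1 Dv by simp
      have ev1: "eventually (\<lambda>t. \<bar>z t s a\<bar> \<le> \<gamma> * Dv + (1 - \<gamma>) * Dv / 4) sequentially"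
        by (rule ld_bound[of "\<lambda>t. \<alpha> t s a" T "\<lambda>t. \<bar>z t s a\<bar>"]) (use a0 a1 ans zb dpos in auto)
      have ev2: "eventually (\<lambda>t. \<bar>Ua t s a + Va t s a + Ea t s a\<bar> < (1 - \<gamma>) * Dv / 4) sequentially"
        using order_tendstoD(2)[OF tendsto_rabs_zero[OF W0[of s a]] dpos] .
      show ?thesis
      proof (rule eventually_mono[OF eventually_conj[OF ev1 ev2]])
        fix t assume h: "\<bar>z t s a\<bar> \<le> \<gamma> * Dv + (1 - \<gamma>) * Dv / 4 \<and> \<bar>Ua t s a + Va t s a + Ea t s a\<bar> < (1 - \<gamma>) * Dv / 4"
        have "QA t s a - Qs s a = z t s a + (Ua t s a + Va t s a + Ea t s a)" by (simp add: z_def)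
        then have "\<bar>QA t s a - Qs s a\<bar> \<le> \<gamma> * Dv + (1 - \<gamma>) * Dv / 2" using h by linarith
        also have "\<dots> = Dv * \<rho>" unfolding \<rho>_def by (rule rho_eq)
        also have "\<dots> = B0 * \<rho> ^ Suc m" using Dv_def by (rule rho_eq2)
        finally show "\<bar>QA t s a - Qs s a\<bar> \<le> B0 * \<rho> ^ Suc m" .
      qed
    qed
    then have "eventually (\<lambda>t. \<forall>s. \<forall>a. \<bar>QA t s a - Qs s a\<bar> \<le> B0 * \<rho> ^ Suc m) sequentially"
      by (intro eventually_all_finite)
    then show ?case by simp
  qed
  have QA0: "(\<lambda>t. QA t s a - Qs s a) \<longlonglongrightarrow> 0" for s a
  proof (rule tendstoI)
    fix \<epsilon> :: real assume \<epsilon>: "0 < \<epsilon>"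
    have "(\<lambda>m. B0 * \<rho> ^ m) \<longlonglongrightarrow> B0 * 0" using \<rho> by (intro tendsto_mult tendsto_const LIMSEQ_power_zero) auto
    then have "eventually (\<lambda>m. B0 * \<rho> ^ m < \<epsilon>) sequentially" using \<epsilon> by (intro order_tendstoD(2)) auto
    then obtain m where m: "B0 * \<rho> ^ m < \<epsilon>" by (auto simp: eventually_sequentially)
    show "eventually (\<lambda>t. dist (QA t s a - Qs s a) 0 < \<epsilon>) sequentially"
    proof (rule eventually_mono[OF contr[of m]])
      fix t assume "\<forall>s a. \<bar>QA t s a - Qs s a\<bar> \<le> B0 * \<rho> ^ m"
      then have "\<bar>QA t s a - Qs s a\<bar> \<le> B0 * \<rho> ^ m" by blast
      then show "dist (QA t s a - Qs s a) 0 < \<epsilon>" using m by (simp add: dist_real_def)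
    qed
  qed
  have 1: "(\<lambda>t. QA t s a) \<longlonglongrightarrow> Qs s a"
    using tendsto_add[OF QA0[of s a] tendsto_const[of "Qs s a"]] by simp
  have "(\<lambda>t. QA t s a - D t s a) \<longlonglongrightarrow> Qs s a - 0" by (intro tendsto_diff 1 D0)
  then have 2: "(\<lambda>t. QB t s a) \<longlonglongrightarrow> Qs s a" by (simp add: D_def)
  show ?thesis using 1 2 by simp
qed

lemma L2_mult:
  fixes f g :: "'w \<Rightarrow> real"
  assumes "integrable M (\<lambda>x. (f x)\<^sup>2)" "integrable M (\<lambda>x. (g x)\<^sup>2)"
    "f \<in> borel_measurable M" "g \<in> borel_measurable M"
  shows "integrable M (\<lambda>x. f x * g x)"
proof (rule Bochner_Integration.integrable_bound[where f="\<lambda>x. (f x)\<^sup>2 + (g x)\<^sup>2"])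
  show "integrable M (\<lambda>x. (f x)\<^sup>2 + (g x)\<^sup>2)" using assms by auto
  show "(\<lambda>x. f x * g x) \<in> borel_measurable M" using assms by measurable
  show "AE x in M. norm (f x * g x) \<le> norm ((f x)\<^sup>2 + (g x)\<^sup>2)"
  proof (intro AE_I2)
    fix x
    have "2 * \<bar>f x\<bar> * \<bar>g x\<bar> \<le> (f x)\<^sup>2 + (g x)\<^sup>2"
      using sum_squares_bound[of "\<bar>f x\<bar>" "\<bar>g x\<bar>"] by (simp add: power2_eq_square)
    moreover have "\<bar>f x\<bar> * \<bar>g x\<bar> \<ge> 0" by simp
    ultimately have "\<bar>f x\<bar> * \<bar>g x\<bar> \<le> (f x)\<^sup>2 + (g x)\<^sup>2" by linarith
    then show "norm (f x * g x) \<le> norm ((f x)\<^sup>2 + (g x)\<^sup>2)" by (simp add: abs_mult)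
  qed
qed

lemma L2_add:
  fixes f g :: "'w \<Rightarrow> real"
  assumes "integrable M (\<lambda>x. (f x)\<^sup>2)" "integrable M (\<lambda>x. (g x)\<^sup>2)"
    "f \<in> borel_measurable M" "g \<in> borel_measurable M"
  shows "integrable M (\<lambda>x. (f x + g x)\<^sup>2)"
proof -
  have "integrable M (\<lambda>x. (f x)\<^sup>2 + 2 * (f x * g x) + (g x)\<^sup>2)"
    using assms L2_mult[OF assms] by auto
  moreover have "(\<lambda>x. (f x + g x)\<^sup>2) = (\<lambda>x. (f x)\<^sup>2 + 2 * (f x * g x) + (g x)\<^sup>2)"
    by (rule ext) (simp add: power2_sum algebra_simps)
  ultimately show ?thesis by simp
qed

locale kol = prob_space M for M :: "'w measure" +
  fixes G :: "nat \<Rightarrow> 'w measure" and d :: "nat \<Rightarrow> 'w \<Rightarrow> real"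
  assumes subG: "\<And>k. subalgebra M (G k)"
    and monoG: "\<And>i j. i \<le> j \<Longrightarrow> sets (G i) \<subseteq> sets (G j)"
    and dmeas: "\<And>k. d k \<in> borel_measurable (G (Suc k))"
    and dsq: "\<And>k. integrable M (\<lambda>\<omega>. (d k \<omega>)\<^sup>2)"
    and orth: "\<And>k \<eta>. \<eta> \<in> borel_measurable (G k) \<Longrightarrow> integrable M (\<lambda>\<omega>. (\<eta> \<omega>)\<^sup>2) \<Longrightarrow>
        (\<integral>\<omega>. \<eta> \<omega> * d k \<omega> \<partial>M) = 0"
begin

lemma spaceG: "space (G k) = space M" using subG[of k] by (simp add: subalgebra_def)

lemma measG: "f \<in> borel_measurable (G i) \<Longrightarrow> i \<le> j \<Longrightarrow> f \<in> borel_measurable (G j)"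
  by (rule measurable_from_subalg[of _ "G i"]) (auto simp: subalgebra_def spaceG monoG)

lemma measM: "f \<in> borel_measurable (G i) \<Longrightarrow> f \<in> borel_measurable M"
  by (rule measurable_from_subalg[OF subG])

lemma setsM: "A \<in> sets (G i) \<Longrightarrow> A \<in> sets M"
  using subG[of i] by (auto simp: subalgebra_def)

definition T :: "nat \<Rightarrow> nat \<Rightarrow> 'w \<Rightarrow> real" where
  "T n j \<omega> = (\<Sum>k\<in>{n..<n+j}. d k \<omega>)"

lemma T_Suc: "T n (Suc j) \<omega> = T n j \<omega> + d (n + j) \<omega>"
  by (simp add: T_def)

lemma T_0: "T n 0 \<omega> = 0" by (simp add: T_def)

lemma T_meas: "T n j \<in> borel_measurable (G (n + j))"
proof (induction j)
  case 0 then show ?case by (simp add: T_0[abs_def])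
next
  case (Suc j)
  have "T n j \<in> borel_measurable (G (n + Suc j))" by (rule measG[OF Suc]) simp
  moreover have "d (n + j) \<in> borel_measurable (G (n + Suc j))" using dmeas[of "n+j"] by simp
  ultimately show ?case unfolding T_Suc[abs_def] by measurable
qed

lemma T_measM: "T n j \<in> borel_measurable M" by (rule measM[OF T_meas])

lemma d_measM: "d k \<in> borel_measurable M" by (rule measM[OF dmeas])

lemma T_sq: "integrable M (\<lambda>\<omega>. (T n j \<omega>)\<^sup>2)"
proof (induction j)
  case 0 then show ?case by (simp add: T_0)
next
  case (Suc j)
  show ?case unfolding T_Suc by (rule L2_add[OF Suc dsq T_measM d_measM])
qed

lemma ind_sq_int:
  fixes f :: "'w \<Rightarrow> real"
  assumes "A \<in> sets M" "integrable M (\<lambda>\<omega>. (f \<omega>)\<^sup>2)"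
  shows "integrable M (\<lambda>\<omega>. indicator A \<omega> * (f \<omega>)\<^sup>2)"
  using integrable_mult_indicator[OF assms] by simp

lemma T_step:
  assumes A: "A \<in> sets (G (n + J))"
  shows "(\<integral>\<omega>. indicator A \<omega> * (T n (Suc J) \<omega>)\<^sup>2 \<partial>M)
       = (\<integral>\<omega>. indicator A \<omega> * (T n J \<omega>)\<^sup>2 \<partial>M) + (\<integral>\<omega>. indicator A \<omega> * (d (n + J) \<omega>)\<^sup>2 \<partial>M)"
proof -
  have AM: "A \<in> sets M" by (rule setsM[OF A])
  define \<eta> where "\<eta> \<omega> = indicator A \<omega> * T n J \<omega>" for \<omega>
  have \<eta>m: "\<eta> \<in> borel_measurable (G (n + J))" unfolding \<eta>_def using A T_meas by measurable
  have \<eta>mM: "\<eta> \<in> borel_measurable M" by (rule measM[OF \<eta>m])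
  have \<eta>sq: "integrable M (\<lambda>\<omega>. (\<eta> \<omega>)\<^sup>2)"
  proof -
    have "(\<lambda>\<omega>. (\<eta> \<omega>)\<^sup>2) = (\<lambda>\<omega>. indicator A \<omega> * (T n J \<omega>)\<^sup>2)"
      by (auto simp: \<eta>_def indicator_def fun_eq_iff)
    then show ?thesis using ind_sq_int[OF AM T_sq[of n J]] by simp
  qed
  have o: "(\<integral>\<omega>. \<eta> \<omega> * d (n + J) \<omega> \<partial>M) = 0" by (rule orth[OF \<eta>m \<eta>sq])
  have i1: "integrable M (\<lambda>\<omega>. indicator A \<omega> * (T n J \<omega>)\<^sup>2)" by (rule ind_sq_int[OF AM T_sq])
  have i2: "integrable M (\<lambda>\<omega>. \<eta> \<omega> * d (n + J) \<omega>)" by (rule L2_mult[OF \<eta>sq dsq \<eta>mM d_measM])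
  have i3: "integrable M (\<lambda>\<omega>. indicator A \<omega> * (d (n + J) \<omega>)\<^sup>2)" by (rule ind_sq_int[OF AM dsq])
  have eq: "indicator A \<omega> * (T n (Suc J) \<omega>)\<^sup>2
     = indicator A \<omega> * (T n J \<omega>)\<^sup>2 + 2 * (\<eta> \<omega> * d (n + J) \<omega>) + indicator A \<omega> * (d (n + J) \<omega>)\<^sup>2" for \<omega>
    by (simp add: T_Suc \<eta>_def power2_sum algebra_simps)
  have "(\<integral>\<omega>. indicator A \<omega> * (T n (Suc J) \<omega>)\<^sup>2 \<partial>M)
     = (\<integral>\<omega>. indicator A \<omega> * (T n J \<omega>)\<^sup>2 + 2 * (\<eta> \<omega> * d (n + J) \<omega>) + indicator A \<omega> * (d (n + J) \<omega>)\<^sup>2 \<partial>M)"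
    by (simp only: eq)
  also have "\<dots> = (\<integral>\<omega>. indicator A \<omega> * (T n J \<omega>)\<^sup>2 \<partial>M) + 2 * (\<integral>\<omega>. \<eta> \<omega> * d (n + J) \<omega> \<partial>M)
      + (\<integral>\<omega>. indicator A \<omega> * (d (n + J) \<omega>)\<^sup>2 \<partial>M)"
    using i1 i2 i3 by simp
  finally show ?thesis using o by simp
qed

lemma mono_ind:
  assumes "j \<le> J" "A \<in> sets (G (n + j))"
  shows "(\<integral>\<omega>. indicator A \<omega> * (T n j \<omega>)\<^sup>2 \<partial>M) \<le> (\<integral>\<omega>. indicator A \<omega> * (T n J \<omega>)\<^sup>2 \<partial>M)"
  using assms(1)
proof (induction J rule: dec_induct)
  case base then show ?case by simp
next
  case (step J)
  have A: "A \<in> sets (G (n + J))" using assms(2) monoG[of "n+j" "n+J"] step by auto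
  have "0 \<le> (\<integral>\<omega>. indicator A \<omega> * (d (n + J) \<omega>)\<^sup>2 \<partial>M)" by (intro integral_nonneg_AE) auto
  then show ?case using step.IH T_step[OF A] by linarith
qed

lemma T_sq_int_eq: "(\<integral>\<omega>. (T n J \<omega>)\<^sup>2 \<partial>M) = (\<Sum>i<J. \<integral>\<omega>. (d (n + i) \<omega>)\<^sup>2 \<partial>M)"
proof (induction J)
  case 0 then show ?case by (simp add: T_0)
next
  case (Suc J)
  have sp: "space M \<in> sets (G (n + J))" using sets.top[of "G (n+J)"] by (simp add: spaceG)
  have ind: "(\<integral>\<omega>. indicator (space M) \<omega> * f \<omega> \<partial>M) = (\<integral>\<omega>. f \<omega> \<partial>M)" for f :: "'w \<Rightarrow> real"
    by (rule Bochner_Integration.integral_cong) auto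
  show ?case using T_step[OF sp] Suc by (simp add: ind)
qed

end

context kol
begin

lemma maximal:
  assumes lamp: "0 < lam"
  shows "lam\<^sup>2 * measure M {\<omega>\<in>space M. \<exists>j\<le>J. lam \<le> \<bar>T n j \<omega>\<bar>} \<le> (\<integral>\<omega>. (T n J \<omega>)\<^sup>2 \<partial>M)"
proof -
  define Aj where "Aj j = {\<omega>\<in>space M. lam \<le> \<bar>T n j \<omega>\<bar>} - (\<Union>i\<in>{..<j}. {\<omega>\<in>space M. lam \<le> \<bar>T n i \<omega>\<bar>})" for j
  have Aj_sets: "Aj j \<in> sets (G (n+j))" for j
  proof -
    have "{\<omega>\<in>space M. lam \<le> \<bar>T n i \<omega>\<bar>} \<in> sets (G (n+j))" if "i \<le> j" for i
    proof -
      have [measurable]: "T n i \<in> borel_measurable (G (n+j))" using measG[OF T_meas] that by simp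
      have "{\<omega>\<in>space (G (n+j)). lam \<le> \<bar>T n i \<omega>\<bar>} \<in> sets (G (n+j))" by measurable
      then show ?thesis by (simp add: spaceG)
    qed
    then show ?thesis unfolding Aj_def by (intro sets.Diff sets.finite_UN) auto
  qed
  have AjM: "Aj j \<in> sets M" for j using setsM[OF Aj_sets] .
  define E where "E = {\<omega>\<in>space M. \<exists>j\<le>J. lam \<le> \<bar>T n j \<omega>\<bar>}"
  have [measurable]: "T n j \<in> borel_measurable M" for j by (rule T_measM)
  have EM: "E \<in> sets M" unfolding E_def by measurable
  have nn: "0 \<le> indicator (Aj j) \<omega> * (T n j \<omega>)\<^sup>2" for j \<omega> by simp
  have pt1: "lam\<^sup>2 * indicator E \<omega> \<le> (\<Sum>j\<le>J. indicator (Aj j) \<omega> * (T n j \<omega>)\<^sup>2)" for \<omega>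
  proof (cases "\<omega> \<in> E")
    case False then show ?thesis by (simp add: sum_nonneg)
  next
    case True
    then obtain j where j: "j \<le> J" "lam \<le> \<bar>T n j \<omega>\<bar>" and om: "\<omega> \<in> space M" by (auto simp: E_def)
    define j0 where "j0 = (LEAST j. lam \<le> \<bar>T n j \<omega>\<bar>)"
    have j0: "lam \<le> \<bar>T n j0 \<omega>\<bar>" unfolding j0_def by (rule LeastI[of _ j]) (rule j(2))
    have j0j: "j0 \<le> j" unfolding j0_def by (rule Least_le) (rule j(2))
    have "\<not> lam \<le> \<bar>T n i \<omega>\<bar>" if "i < j0" for i using not_less_Least[OF that[unfolded j0_def]] unfolding j0_def .
    then have inA: "\<omega> \<in> Aj j0" using om j0 by (auto simp: Aj_def)
    have "lam\<^sup>2 \<le> \<bar>T n j0 \<omega>\<bar>\<^sup>2" using j0 lamp by (intro power_mono) auto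
    then have "lam\<^sup>2 * indicator E \<omega> \<le> indicator (Aj j0) \<omega> * (T n j0 \<omega>)\<^sup>2" using True inA by simp
    also have "\<dots> \<le> (\<Sum>j\<le>J. indicator (Aj j) \<omega> * (T n j \<omega>)\<^sup>2)"
      using j0j j(1) by (intro member_le_sum[of j0 "{..J}" "\<lambda>j. indicator (Aj j) \<omega> * (T n j \<omega>)\<^sup>2"] nn) auto
    finally show ?thesis .
  qed
  have pt2: "(\<Sum>j\<le>J. indicator (Aj j) \<omega>) \<le> (1::real)" for \<omega>
  proof (cases "\<exists>j\<le>J. \<omega> \<in> Aj j")
    case False then show ?thesis by simp
  next
    case True
    then obtain j1 where j1: "j1 \<le> J" "\<omega> \<in> Aj j1" by blast
    have other: "\<omega> \<notin> Aj i" if "i \<noteq> j1" for i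
    proof
      assume i: "\<omega> \<in> Aj i"
      show False
      proof (cases "i < j1")
        case True then show False using i j1(2) by (auto simp: Aj_def)
      next
        case False then have "j1 < i" using that by simp
        then show False using i j1(2) by (auto simp: Aj_def)
      qed
    qed
    have "(\<Sum>j\<le>J. indicator (Aj j) \<omega>) = (indicator (Aj j1) \<omega> :: real) + (\<Sum>j\<in>{..J} - {j1}. indicator (Aj j) \<omega>)"
      using j1(1) by (subst sum.remove[of _ j1]) auto
    also have "(\<Sum>j\<in>{..J} - {j1}. indicator (Aj j) \<omega> :: real) = 0"
      using other by (intro sum.neutral) auto
    finally show ?thesis by simp
  qed
  have iE: "integrable M (\<lambda>\<omega>. lam\<^sup>2 * indicator E \<omega>)" using EM by (intro integrable_mult_right integrable_real_indicator) (auto simp: emeasure_finite less_top[symmetric])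
  have iS: "integrable M (\<lambda>\<omega>. \<Sum>j\<le>J. indicator (Aj j) \<omega> * (T n j \<omega>)\<^sup>2)"
    by (intro Bochner_Integration.integrable_sum ind_sq_int[OF AjM T_sq])
  have iS2: "integrable M (\<lambda>\<omega>. \<Sum>j\<le>J. indicator (Aj j) \<omega> * (T n J \<omega>)\<^sup>2)"
    by (intro Bochner_Integration.integrable_sum ind_sq_int[OF AjM T_sq])
  have "lam\<^sup>2 * measure M E = (\<integral>\<omega>. lam\<^sup>2 * indicator E \<omega> \<partial>M)"
  proof -
    have "(\<integral>\<omega>. indicator E \<omega> \<partial>M) = measure M E" using EM sets.sets_into_space[OF EM] by (simp add: Int_absorb2)
    then show ?thesis by simp
  qed
  also have "\<dots> \<le> (\<integral>\<omega>. (\<Sum>j\<le>J. indicator (Aj j) \<omega> * (T n j \<omega>)\<^sup>2) \<partial>M)"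
    by (rule integral_mono[OF iE iS pt1])
  also have "\<dots> = (\<Sum>j\<le>J. \<integral>\<omega>. indicator (Aj j) \<omega> * (T n j \<omega>)\<^sup>2 \<partial>M)"
    by (intro Bochner_Integration.integral_sum ind_sq_int[OF AjM T_sq])
  also have "\<dots> \<le> (\<Sum>j\<le>J. \<integral>\<omega>. indicator (Aj j) \<omega> * (T n J \<omega>)\<^sup>2 \<partial>M)"
    by (intro sum_mono mono_ind Aj_sets) auto
  also have "\<dots> = (\<integral>\<omega>. (\<Sum>j\<le>J. indicator (Aj j) \<omega> * (T n J \<omega>)\<^sup>2) \<partial>M)"
    by (intro Bochner_Integration.integral_sum[symmetric] ind_sq_int[OF AjM T_sq])
  also have "\<dots> \<le> (\<integral>\<omega>. (T n J \<omega>)\<^sup>2 \<partial>M)"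
  proof (rule integral_mono[OF iS2 T_sq])
    fix \<omega>
    have "(\<Sum>j\<le>J. indicator (Aj j) \<omega> * (T n J \<omega>)\<^sup>2) = (\<Sum>j\<le>J. indicator (Aj j) \<omega>) * (T n J \<omega>)\<^sup>2"
      by (simp add: sum_distrib_right)
    also have "\<dots> \<le> 1 * (T n J \<omega>)\<^sup>2" using pt2[of \<omega>] by (intro mult_right_mono) auto
    finally show "(\<Sum>j\<le>J. indicator (Aj j) \<omega> * (T n J \<omega>)\<^sup>2) \<le> (T n J \<omega>)\<^sup>2" by simp
  qed
  finally show ?thesis unfolding E_def .
qed

end

context kol
begin

lemma tail_bound:
  assumes lamp: "0 < lam" and ss: "summable (\<lambda>k. \<integral>\<omega>. (d k \<omega>)\<^sup>2 \<partial>M)"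
  shows "measure M {\<omega>\<in>space M. \<exists>j. lam < \<bar>T n j \<omega>\<bar>} \<le> (\<Sum>i. \<integral>\<omega>. (d (i + n) \<omega>)\<^sup>2 \<partial>M) / lam\<^sup>2"
proof -
  define B where "B J = {\<omega>\<in>space M. \<exists>j\<le>J. lam < \<bar>T n j \<omega>\<bar>}" for J
  have [measurable]: "T n j \<in> borel_measurable M" for j by (rule T_measM)
  have BM: "B J \<in> sets M" for J unfolding B_def by measurable
  have inc: "incseq B"
  proof (rule incseq_SucI)
    fix J show "B J \<subseteq> B (Suc J)" unfolding B_def by (auto intro: le_SucI)
  qed
  have Un: "(\<Union>J. B J) = {\<omega>\<in>space M. \<exists>j. lam < \<bar>T n j \<omega>\<bar>}" unfolding B_def by auto
  have sn: "summable (\<lambda>i. \<integral>\<omega>. (d (i + n) \<omega>)\<^sup>2 \<partial>M)" using summable_iff_shift[of "\<lambda>k. \<integral>\<omega>. (d k \<omega>)\<^sup>2 \<partial>M" n] ss by simp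
  have bnd: "measure M (B J) \<le> (\<Sum>i. \<integral>\<omega>. (d (i + n) \<omega>)\<^sup>2 \<partial>M) / lam\<^sup>2" for J
  proof -
    have "B J \<subseteq> {\<omega>\<in>space M. \<exists>j\<le>J. lam \<le> \<bar>T n j \<omega>\<bar>}" unfolding B_def by (auto intro: less_imp_le)
    then have "measure M (B J) \<le> measure M {\<omega>\<in>space M. \<exists>j\<le>J. lam \<le> \<bar>T n j \<omega>\<bar>}"
      by (intro finite_measure_mono) measurable
    then have "lam\<^sup>2 * measure M (B J) \<le> lam\<^sup>2 * measure M {\<omega>\<in>space M. \<exists>j\<le>J. lam \<le> \<bar>T n j \<omega>\<bar>}"
      by (intro mult_left_mono) auto
    also have "\<dots> \<le> (\<integral>\<omega>. (T n J \<omega>)\<^sup>2 \<partial>M)" by (rule maximal[OF lamp])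
    also have "\<dots> = (\<Sum>i<J. \<integral>\<omega>. (d (n + i) \<omega>)\<^sup>2 \<partial>M)" by (rule T_sq_int_eq)
    also have "\<dots> \<le> (\<Sum>i. \<integral>\<omega>. (d (i + n) \<omega>)\<^sup>2 \<partial>M)"
      using sum_le_suminf[OF sn, of "{..<J}"] by (simp add: add.commute)
    finally show ?thesis using lamp by (simp add: field_simps)
  qed
  have "(\<lambda>J. measure M (B J)) \<longlonglongrightarrow> measure M (\<Union>J. B J)"
    by (rule finite_Lim_measure_incseq) (use BM inc in auto)
  then have "measure M (\<Union>J. B J) \<le> (\<Sum>i. \<integral>\<omega>. (d (i + n) \<omega>)\<^sup>2 \<partial>M) / lam\<^sup>2"
    by (rule LIMSEQ_le_const2) (use bnd in auto)
  then show ?thesis unfolding Un .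
qed

lemma AE_small:
  assumes ep: "0 < \<epsilon>" and ss: "summable (\<lambda>k. \<integral>\<omega>. (d k \<omega>)\<^sup>2 \<partial>M)"
  shows "AE \<omega> in M. \<exists>n. \<forall>j. \<bar>T n j \<omega>\<bar> \<le> \<epsilon>"
proof -
  have [measurable]: "T n j \<in> borel_measurable M" for n j by (rule T_measM)
  define Z where "Z = {\<omega>\<in>space M. \<forall>n. \<exists>j. \<epsilon> < \<bar>T n j \<omega>\<bar>}"
  have ZM: "Z \<in> sets M" unfolding Z_def by measurable
  define tl where "tl n = (\<Sum>i. \<integral>\<omega>. (d (i + n) \<omega>)\<^sup>2 \<partial>M) / \<epsilon>\<^sup>2" for n
  have mZ: "measure M Z \<le> tl n" for n
  proof -
    have "Z \<subseteq> {\<omega>\<in>space M. \<exists>j. \<epsilon> < \<bar>T n j \<omega>\<bar>}" unfolding Z_def by auto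
    then have "measure M Z \<le> measure M {\<omega>\<in>space M. \<exists>j. \<epsilon> < \<bar>T n j \<omega>\<bar>}"
      by (intro finite_measure_mono) measurable
    also have "\<dots> \<le> tl n" unfolding tl_def by (rule tail_bound[OF ep ss])
    finally show ?thesis .
  qed
  have "tl \<longlonglongrightarrow> 0 / \<epsilon>\<^sup>2" unfolding tl_def[abs_def]
    by (intro tendsto_divide tendsto_const suminf_exist_split2 ss) (use ep in auto)
  then have "measure M Z \<le> 0" by (intro LIMSEQ_le_const) (use mZ in auto)
  then have "measure M Z = 0" using measure_nonneg[of M Z] by linarith
  then have "Z \<in> null_sets M" using ZM by (simp add: emeasure_eq_measure null_sets_def)
  then show ?thesis by (rule AE_I') (auto simp: Z_def not_le)
qed

lemma kol_summable:
  assumes ss: "summable (\<lambda>k. \<integral>\<omega>. (d k \<omega>)\<^sup>2 \<partial>M)"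
  shows "AE \<omega> in M. summable (\<lambda>k. d k \<omega>)"
proof -
  have "\<forall>m. AE \<omega> in M. \<exists>n. \<forall>j. \<bar>T n j \<omega>\<bar> \<le> 1 / real (Suc m)"
    using AE_small[OF _ ss] by simp
  then have "AE \<omega> in M. \<forall>m. \<exists>n. \<forall>j. \<bar>T n j \<omega>\<bar> \<le> 1 / real (Suc m)"
    by (simp add: AE_all_countable)
  then show ?thesis
  proof (rule AE_mp[OF _ AE_I2], intro impI)
    fix \<omega> assume H: "\<forall>m. \<exists>n. \<forall>j. \<bar>T n j \<omega>\<bar> \<le> 1 / real (Suc m)"
    show "summable (\<lambda>k. d k \<omega>)"
      unfolding summable_Cauchy
    proof (intro allI impI)
      fix e :: real assume e: "0 < e"
      obtain m where "inverse (real (Suc m)) < e / 2"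
        using reals_Archimedean[of "e/2"] e by auto
      then have m: "1 / real (Suc m) < e / 2" by (simp add: inverse_eq_divide)
      obtain n where n: "\<And>j. \<bar>T n j \<omega>\<bar> \<le> 1 / real (Suc m)" using H by blast
      have "\<forall>m'\<ge>n. \<forall>n'. norm (sum (\<lambda>k. d k \<omega>) {m'..<n'}) < e"
      proof (intro allI impI)
        fix m' n' assume mn: "n \<le> m'"
        show "norm (sum (\<lambda>k. d k \<omega>) {m'..<n'}) < e"
        proof (cases "m' \<le> n'")
          case False then show ?thesis using e by simp
        next
          case True
          have "sum (\<lambda>k. d k \<omega>) {m'..<n'} = sum (\<lambda>k. d k \<omega>) {n..<n'} - sum (\<lambda>k. d k \<omega>) {n..<m'}"
            using sum_diff_nat_ivl[of n m' n' "\<lambda>k. d k \<omega>"] mn True by simp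
          also have "\<dots> = T n (n' - n) \<omega> - T n (m' - n) \<omega>" using mn True by (simp add: T_def)
          finally have eq: "sum (\<lambda>k. d k \<omega>) {m'..<n'} = T n (n' - n) \<omega> - T n (m' - n) \<omega>" .
          have "\<bar>sum (\<lambda>k. d k \<omega>) {m'..<n'}\<bar> \<le> \<bar>T n (n' - n) \<omega>\<bar> + \<bar>T n (m' - n) \<omega>\<bar>"
            unfolding eq by (rule abs_triangle_ineq4)
          also have "\<dots> \<le> 2 / real (Suc m)" using n[of "n' - n"] n[of "m' - n"] by simp
          also have "\<dots> < e" using m by simp
          finally show ?thesis by simp
        qed
      qed
      then show "\<exists>N. \<forall>m'\<ge>N. \<forall>n'. norm (sum (\<lambda>k. d k \<omega>) {m'..<n'}) < e" by blast
    qed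
  qed
qed

end

lemma trunc_sum:
  fixes p :: "nat \<Rightarrow> real"
  assumes p: "\<And>i. 0 \<le> p i" and N: "0 \<le> N"
  shows "(\<Sum>k<n. (if (\<Sum>i\<le>k. p i) \<le> N then p k else 0)) \<le> N \<and>
         ((\<Sum>i<n. p i) \<le> N \<longrightarrow> (\<Sum>k<n. (if (\<Sum>i\<le>k. p i) \<le> N then p k else 0)) = (\<Sum>i<n. p i))"
proof (induction n)
  case 0
  then show ?case using N by simp
next
  case (Suc n)
  have le: "(\<Sum>i<n. p i) \<le> (\<Sum>i\<le>n. p i)" using p[of n] by (simp add: lessThan_Suc_atMost[symmetric])
  show ?case
  proof (cases "(\<Sum>i\<le>n. p i) \<le> N")
    case True
    then have "(\<Sum>i<n. p i) \<le> N" using le by linarith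
    then show ?thesis using Suc True by (simp add: lessThan_Suc_atMost[symmetric])
  next
    case False
    then show ?thesis using Suc by (simp add: lessThan_Suc_atMost[symmetric])
  qed
qed


lemma mart_summable:
  fixes M :: "'w measure" and G :: "nat \<Rightarrow> 'w measure" and \<xi> \<beta> :: "nat \<Rightarrow> 'w \<Rightarrow> real"
  assumes prob: "prob_space M"
    and subG: "\<And>k. subalgebra M (G k)" and monoG: "\<And>i j. i \<le> j \<Longrightarrow> sets (G i) \<subseteq> sets (G j)"
    and \<xi>m: "\<And>k. \<xi> k \<in> borel_measurable (G (Suc k))"
    and \<xi>sq: "\<And>k. integrable M (\<lambda>\<omega>. (\<xi> k \<omega>)\<^sup>2)"
    and \<xi>orth: "\<And>k \<eta>. \<eta> \<in> borel_measurable (G k) \<Longrightarrow> integrable M (\<lambda>\<omega>. (\<eta> \<omega>)\<^sup>2) \<Longrightarrow>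
        (\<integral>\<omega>. \<eta> \<omega> * \<xi> k \<omega> \<partial>M) = 0"
    and \<xi>var: "\<And>k \<eta>. \<eta> \<in> borel_measurable (G k) \<Longrightarrow> (\<And>\<omega>. 0 \<le> \<eta> \<omega>) \<Longrightarrow> (\<And>\<omega>. \<eta> \<omega> \<le> 1) \<Longrightarrow>
        (\<integral>\<omega>. \<eta> \<omega> * (\<xi> k \<omega>)\<^sup>2 \<partial>M) \<le> C * (\<integral>\<omega>. \<eta> \<omega> \<partial>M)"
    and \<beta>m: "\<And>k. \<beta> k \<in> borel_measurable (G k)"
    and \<beta>01: "AE \<omega> in M. \<forall>k. 0 \<le> \<beta> k \<omega> \<and> \<beta> k \<omega> \<le> 1"
    and \<beta>sq: "AE \<omega> in M. summable (\<lambda>k. (\<beta> k \<omega>)\<^sup>2)"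
  shows "AE \<omega> in M. summable (\<lambda>k. \<beta> k \<omega> * \<xi> k \<omega>)"
proof -
  interpret prob_space M by (rule prob)
  have spaceG: "space (G k) = space M" for k using subG[of k] by (simp add: subalgebra_def)
  have measG: "f \<in> borel_measurable (G i) \<Longrightarrow> i \<le> j \<Longrightarrow> f \<in> borel_measurable (G j)" for f :: "'w \<Rightarrow> real" and i j
    by (rule measurable_from_subalg[of _ "G i"]) (auto simp: subalgebra_def spaceG monoG)
  have measM: "f \<in> borel_measurable (G i) \<Longrightarrow> f \<in> borel_measurable M" for f :: "'w \<Rightarrow> real" and i
    by (rule measurable_from_subalg[OF subG])
  define b where "b k \<omega> = max 0 (min 1 (\<beta> k \<omega>))" for k \<omega>
  have bm: "b k \<in> borel_measurable (G k)" for k unfolding b_def using \<beta>m[of k] by measurable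
  have b01: "0 \<le> b k \<omega>" "b k \<omega> \<le> 1" for k \<omega> by (auto simp: b_def)
  define c where "c N k \<omega> = (if (\<Sum>i\<le>k. (b i \<omega>)\<^sup>2) \<le> real N then b k \<omega> else 0)" for N k \<omega>
  have cm: "c N k \<in> borel_measurable (G k)" for N k
  proof -
    have [measurable]: "b i \<in> borel_measurable (G k)" if "i \<le> k" for i using measG[OF bm that] .
    have "(\<lambda>\<omega>. \<Sum>i\<le>k. (b i \<omega>)\<^sup>2) \<in> borel_measurable (G k)"
      by (intro borel_measurable_sum) (auto intro: borel_measurable_power measG[OF bm])
    then show ?thesis unfolding c_def using bm[of k] by measurable
  qed
  have c01: "0 \<le> c N k \<omega>" "c N k \<omega> \<le> 1" for N k \<omega> using b01 by (auto simp: c_def)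
  define d where "d N k \<omega> = c N k \<omega> * \<xi> k \<omega>" for N k \<omega>
  have sq_le: "integrable M (\<lambda>\<omega>. (a \<omega> * f \<omega>)\<^sup>2)" if "integrable M (\<lambda>\<omega>. (f \<omega>)\<^sup>2)" "a \<in> borel_measurable M"
    "f \<in> borel_measurable M" "\<And>\<omega>. \<bar>a \<omega>\<bar> \<le> 1" for a f :: "'w \<Rightarrow> real"
  proof (rule Bochner_Integration.integrable_bound[OF that(1)])
    show "(\<lambda>\<omega>. (a \<omega> * f \<omega>)\<^sup>2) \<in> borel_measurable M" using that by measurable
    show "AE \<omega> in M. norm ((a \<omega> * f \<omega>)\<^sup>2) \<le> norm ((f \<omega>)\<^sup>2)"
    proof (intro AE_I2)
      fix \<omega>
      have "(a \<omega>)\<^sup>2 \<le> 1" using that(4)[of \<omega>] by (simp add: abs_square_le_1)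
      then have "(a \<omega>)\<^sup>2 * (f \<omega>)\<^sup>2 \<le> 1 * (f \<omega>)\<^sup>2" by (intro mult_right_mono) auto
      then show "norm ((a \<omega> * f \<omega>)\<^sup>2) \<le> norm ((f \<omega>)\<^sup>2)" by (simp add: power_mult_distrib)
    qed
  qed
  have kolN: "kol M G (d N)" for N
  proof
    show "subalgebra M (G k)" for k by (rule subG)
    show "sets (G i) \<subseteq> sets (G j)" if "i \<le> j" for i j using monoG[OF that] .
    show "d N k \<in> borel_measurable (G (Suc k))" for k
    proof -
      have [measurable]: "c N k \<in> borel_measurable (G (Suc k))" using measG[OF cm] by simp
      have [measurable]: "\<xi> k \<in> borel_measurable (G (Suc k))" by (rule \<xi>m)
      show ?thesis unfolding d_def[abs_def] by measurable
    qed
    show "integrable M (\<lambda>\<omega>. (d N k \<omega>)\<^sup>2)" for k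
      unfolding d_def by (rule sq_le[OF \<xi>sq measM[OF cm] measM[OF \<xi>m]]) (use c01 in auto)
    show "(\<integral>\<omega>. \<eta> \<omega> * d N k \<omega> \<partial>M) = 0"
      if "\<eta> \<in> borel_measurable (G k)" "integrable M (\<lambda>\<omega>. (\<eta> \<omega>)\<^sup>2)" for k \<eta>
    proof -
      have "(\<integral>\<omega>. (c N k \<omega> * \<eta> \<omega>) * \<xi> k \<omega> \<partial>M) = 0"
      proof (rule \<xi>orth)
        show "(\<lambda>\<omega>. c N k \<omega> * \<eta> \<omega>) \<in> borel_measurable (G k)" using cm that(1) by measurable
        show "integrable M (\<lambda>\<omega>. (c N k \<omega> * \<eta> \<omega>)\<^sup>2)"
          by (rule sq_le[OF that(2) measM[OF cm] measM[OF that(1)]]) (use c01 in auto)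
      qed
      then show ?thesis by (simp add: d_def mult_ac)
    qed
  qed
  have ssN: "summable (\<lambda>k. \<integral>\<omega>. (d N k \<omega>)\<^sup>2 \<partial>M)" for N
  proof (rule summableI_nonneg_bounded[where x="\<bar>C\<bar> * real N"])
    show "0 \<le> (\<integral>\<omega>. (d N k \<omega>)\<^sup>2 \<partial>M)" for k by (intro integral_nonneg_AE) auto
    fix n
    have c2m: "(\<lambda>\<omega>. (c N k \<omega>)\<^sup>2) \<in> borel_measurable (G k)" for k using cm[of N k] by measurable
    have c2i: "integrable M (\<lambda>\<omega>. (c N k \<omega>)\<^sup>2)" for k
      by (rule integrable_const_bound[where B=1]) (use c01 measM[OF c2m] in \<open>auto simp: abs_square_le_1\<close>)
    have each: "(\<integral>\<omega>. (d N k \<omega>)\<^sup>2 \<partial>M) \<le> \<bar>C\<bar> * (\<integral>\<omega>. (c N k \<omega>)\<^sup>2 \<partial>M)" for k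
    proof -
      have "(\<integral>\<omega>. (d N k \<omega>)\<^sup>2 \<partial>M) = (\<integral>\<omega>. (c N k \<omega>)\<^sup>2 * (\<xi> k \<omega>)\<^sup>2 \<partial>M)"
        by (simp add: d_def power_mult_distrib)
      also have "\<dots> \<le> C * (\<integral>\<omega>. (c N k \<omega>)\<^sup>2 \<partial>M)"
        by (rule \<xi>var[OF c2m]) (use c01 in \<open>auto simp: abs_square_le_1\<close>)
      also have "\<dots> \<le> \<bar>C\<bar> * (\<integral>\<omega>. (c N k \<omega>)\<^sup>2 \<partial>M)"
        by (intro mult_right_mono integral_nonneg_AE) auto
      finally show ?thesis .
    qed
    have "(\<Sum>k<n. \<integral>\<omega>. (d N k \<omega>)\<^sup>2 \<partial>M) \<le> (\<Sum>k<n. \<bar>C\<bar> * (\<integral>\<omega>. (c N k \<omega>)\<^sup>2 \<partial>M))"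
      by (intro sum_mono each)
    also have "\<dots> = \<bar>C\<bar> * (\<integral>\<omega>. (\<Sum>k<n. (c N k \<omega>)\<^sup>2) \<partial>M)"
      by (simp add: sum_distrib_left[symmetric] Bochner_Integration.integral_sum[OF c2i])
    also have "\<dots> \<le> \<bar>C\<bar> * (\<integral>\<omega>. real N \<partial>M)"
    proof (intro mult_left_mono integral_mono)
      show "integrable M (\<lambda>\<omega>. \<Sum>k<n. (c N k \<omega>)\<^sup>2)" by (intro Bochner_Integration.integrable_sum c2i)
      show "integrable M (\<lambda>\<omega>. real N)" by simp
      fix \<omega>
      have "(c N k \<omega>)\<^sup>2 = (if (\<Sum>i\<le>k. (b i \<omega>)\<^sup>2) \<le> real N then (b k \<omega>)\<^sup>2 else 0)" for k
        by (simp add: c_def)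
      then show "(\<Sum>k<n. (c N k \<omega>)\<^sup>2) \<le> real N"
        using trunc_sum[of "\<lambda>i. (b i \<omega>)\<^sup>2" "real N" n] by simp
    qed simp
    also have "\<dots> = \<bar>C\<bar> * real N" by (simp add: prob_space)
    finally show "(\<Sum>k<n. \<integral>\<omega>. (d N k \<omega>)\<^sup>2 \<partial>M) \<le> \<bar>C\<bar> * real N" .
  qed
  have "\<forall>N. AE \<omega> in M. summable (\<lambda>k. d N k \<omega>)"
    using kol.kol_summable[OF kolN ssN] by blast
  then have AEd: "AE \<omega> in M. \<forall>N. summable (\<lambda>k. d N k \<omega>)" by (simp add: AE_all_countable)
  show ?thesis using AEd \<beta>01 \<beta>sq
  proof eventually_elim
    case (elim \<omega>)
    have bb: "b k \<omega> = \<beta> k \<omega>" for k using elim(2) by (auto simp: b_def)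
    have sb: "summable (\<lambda>k. (b k \<omega>)\<^sup>2)" using elim(3) by (simp add: bb)
    obtain N :: nat where N: "(\<Sum>k. (b k \<omega>)\<^sup>2) \<le> real N" using real_arch_simple by blast
    have "c N k \<omega> = \<beta> k \<omega>" for k
    proof -
      have "(\<Sum>i\<le>k. (b i \<omega>)\<^sup>2) \<le> (\<Sum>k. (b k \<omega>)\<^sup>2)"
        by (rule sum_le_suminf[OF sb]) auto
      then show ?thesis using N by (simp add: c_def bb)
    qed
    then have "(\<lambda>k. d N k \<omega>) = (\<lambda>k. \<beta> k \<omega> * \<xi> k \<omega>)" by (simp add: d_def)
    then show ?case using elim(1) by metis
  qed
qed

locale mdp =
  fixes M :: "'w measure" and F :: "nat \<Rightarrow> 'w measure"
    and Kr :: "'s::finite \<Rightarrow> 'a::finite \<Rightarrow> (real \<times> 's) measure"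
    and S :: "nat \<Rightarrow> 'w \<Rightarrow> 's" and A :: "nat \<Rightarrow> 'w \<Rightarrow> 'a" and Rw :: "nat \<Rightarrow> 'w \<Rightarrow> real"
  assumes prob: "prob_space M"
    and filt: "filtration (space M) F" and sub: "\<And>t. subalgebra M (F t)"
    and Kr_prob: "\<And>s a. prob_space (Kr s a)"
    and Kr_sets: "\<And>s a. sets (Kr s a) = sets (borel \<Otimes>\<^sub>M count_space UNIV)"
    and Kr_var: "\<And>s a. integrable (Kr s a) (\<lambda>x. (fst x)\<^sup>2)"
    and S_meas: "\<And>t. S t \<in> measurable (F t) (count_space UNIV)"
    and A_meas: "\<And>t. A t \<in> measurable (F t) (count_space UNIV)"
    and R_meas: "\<And>t. Rw t \<in> borel_measurable (F (Suc t))"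
    and sample_law: "\<And>t E B. E \<in> sets (F t) \<Longrightarrow> B \<in> sets (borel \<Otimes>\<^sub>M count_space UNIV) \<Longrightarrow>
        measure M (E \<inter> {\<omega> \<in> space M. (Rw t \<omega>, S (Suc t) \<omega>) \<in> B})
          = (\<integral>\<omega>. indicator E \<omega> * measure (Kr (S t \<omega>) (A t \<omega>)) B \<partial>M)"
begin

interpretation P: prob_space M by (rule prob)

lemma spaceF: "space (F t) = space M" using sub[of t] by (simp add: subalgebra_def)

lemma setsF_M: "E \<in> sets (F t) \<Longrightarrow> E \<in> sets M" using sub[of t] by (auto simp: subalgebra_def)

lemma measF_M: "f \<in> measurable (F t) N \<Longrightarrow> f \<in> measurable M N"
  by (rule measurable_from_subalg[OF sub])

lemma measF_mono: "f \<in> measurable (F i) N \<Longrightarrow> i \<le> j \<Longrightarrow> f \<in> measurable (F j) N"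
  by (rule measurable_from_subalg[of _ "F i"])
     (auto simp: subalgebra_def spaceF filtration.sets_F_mono[OF filt])

abbreviation "KN \<equiv> (borel \<Otimes>\<^sub>M count_space UNIV :: (real \<times> 's) measure)"

definition X :: "nat \<Rightarrow> 'w \<Rightarrow> real \<times> 's" where "X t \<omega> = (Rw t \<omega>, S (Suc t) \<omega>)"

lemma X_meas: "X t \<in> measurable (F (Suc t)) KN"
  unfolding X_def using R_meas[of t] S_meas[of "Suc t"] by measurable

lemma X_measM: "X t \<in> measurable M KN" by (rule measF_M[OF X_meas])

lemma sets_Esa:
  assumes "E \<in> sets (F t)"
  shows "E \<inter> {\<omega>\<in>space M. S t \<omega> = s \<and> A t \<omega> = a} \<in> sets (F t)"
proof -
  have [measurable]: "S t \<in> measurable (F t) (count_space UNIV)" "A t \<in> measurable (F t) (count_space UNIV)"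
    using S_meas A_meas by auto
  have "{\<omega>\<in>space (F t). S t \<omega> = s \<and> A t \<omega> = a} \<in> sets (F t)" by measurable
  then show ?thesis using assms by (simp add: spaceF)
qed

lemma distr_eq:
  assumes E: "E \<in> sets (F t)" and Esub: "E \<subseteq> {\<omega>\<in>space M. S t \<omega> = s \<and> A t \<omega> = a}"
  shows "distr (density M (\<lambda>\<omega>. ennreal (indicator E \<omega>))) KN (X t)
       = density (Kr s a) (\<lambda>_. ennreal (measure M E))"
proof (rule measure_eqI)
  show "sets (distr (density M (\<lambda>\<omega>. ennreal (indicator E \<omega>))) KN (X t)) = sets (density (Kr s a) (\<lambda>_. ennreal (measure M E)))"
    using Kr_sets[of s a] by simp
  fix B assume "B \<in> sets (distr (density M (\<lambda>\<omega>. ennreal (indicator E \<omega>))) KN (X t))"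
  then have B: "B \<in> sets KN" by simp
  have EM: "E \<in> sets M" by (rule setsF_M[OF E])
  have XB: "X t -` B \<inter> space M \<in> sets M" using X_measM B by (rule measurable_sets)
  have "emeasure (distr (density M (\<lambda>\<omega>. ennreal (indicator E \<omega>))) KN (X t)) B
      = emeasure (density M (\<lambda>\<omega>. ennreal (indicator E \<omega>))) (X t -` B \<inter> space M)"
    using X_measM B by (subst emeasure_distr) auto
  also have "\<dots> = (\<integral>\<^sup>+ \<omega>. ennreal (indicator E \<omega>) * indicator (X t -` B \<inter> space M) \<omega> \<partial>M)"
    using EM XB by (subst emeasure_density) auto
  also have "\<dots> = (\<integral>\<^sup>+ \<omega>. indicator (E \<inter> (X t -` B \<inter> space M)) \<omega> \<partial>M)"
    by (intro nn_integral_cong) (auto simp: indicator_def)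
  also have "\<dots> = emeasure M (E \<inter> (X t -` B \<inter> space M))"
    using EM XB by (intro nn_integral_indicator) auto
  also have "E \<inter> (X t -` B \<inter> space M) = E \<inter> {\<omega> \<in> space M. (Rw t \<omega>, S (Suc t) \<omega>) \<in> B}"
    by (auto simp: X_def)
  also have "emeasure M (E \<inter> {\<omega> \<in> space M. (Rw t \<omega>, S (Suc t) \<omega>) \<in> B})
      = ennreal (measure M (E \<inter> {\<omega> \<in> space M. (Rw t \<omega>, S (Suc t) \<omega>) \<in> B}))"
    by (rule P.emeasure_eq_measure)
  also have "measure M (E \<inter> {\<omega> \<in> space M. (Rw t \<omega>, S (Suc t) \<omega>) \<in> B})
      = (\<integral>\<omega>. indicator E \<omega> * measure (Kr (S t \<omega>) (A t \<omega>)) B \<partial>M)"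
    by (rule sample_law[OF E B])
  also have "\<dots> = (\<integral>\<omega>. indicator E \<omega> * measure (Kr s a) B \<partial>M)"
    using Esub by (intro Bochner_Integration.integral_cong) (auto simp: indicator_def)
  also have "\<dots> = measure M E * measure (Kr s a) B"
    using EM by simp
  finally have 1: "emeasure (distr (density M (\<lambda>\<omega>. ennreal (indicator E \<omega>))) KN (X t)) B
      = ennreal (measure M E * measure (Kr s a) B)" .
  have BK: "B \<in> sets (Kr s a)" using B Kr_sets by simp
  interpret K: prob_space "Kr s a" by (rule Kr_prob)
  have "emeasure (density (Kr s a) (\<lambda>_. ennreal (measure M E))) B = (\<integral>\<^sup>+ x. ennreal (measure M E) * indicator B x \<partial>Kr s a)"
    using BK by (subst emeasure_density) auto
  also have "\<dots> = ennreal (measure M E) * emeasure (Kr s a) B"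
    using BK by (simp add: nn_integral_cmult_indicator)
  also have "\<dots> = ennreal (measure M E * measure (Kr s a) B)"
    by (simp add: K.emeasure_eq_measure ennreal_mult)
  finally show "emeasure (distr (density M (\<lambda>\<omega>. ennreal (indicator E \<omega>))) KN (X t)) B
      = emeasure (density (Kr s a) (\<lambda>_. ennreal (measure M E))) B" using 1 by simp
qed

lemma P1_sa:
  assumes E: "E \<in> sets (F t)" and Esub: "E \<subseteq> {\<omega>\<in>space M. S t \<omega> = s \<and> A t \<omega> = a}"
    and gm: "g \<in> borel_measurable KN" and gi: "integrable (Kr s a) g"
  shows "integrable M (\<lambda>\<omega>. indicator E \<omega> * g (X t \<omega>))"
    and "(\<integral>\<omega>. indicator E \<omega> * g (X t \<omega>) \<partial>M) = measure M E * (\<integral>x. g x \<partial>Kr s a)"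
proof -
  have EM: "E \<in> sets M" by (rule setsF_M[OF E])
  define D where "D = density M (\<lambda>\<omega>. ennreal (indicator E \<omega>))"
  have dist: "distr D KN (X t) = density (Kr s a) (\<lambda>_. ennreal (measure M E))"
    unfolding D_def by (rule distr_eq[OF E Esub])
  have XD: "X t \<in> measurable D KN" unfolding D_def using X_measM by simp
  have gK: "g \<in> borel_measurable (Kr s a)" using gm Kr_sets[of s a] by (simp cong: measurable_cong_sets)
  have indm: "(\<lambda>\<omega>. indicator E \<omega> :: real) \<in> borel_measurable M" using EM by simp
  have gX: "(\<lambda>\<omega>. g (X t \<omega>)) \<in> borel_measurable M" using gm X_measM by measurable
  have "integrable (density (Kr s a) (\<lambda>_. ennreal (measure M E))) g"
    using gi gK by (subst integrable_density) auto
  then have "integrable (distr D KN (X t)) g" by (simp add: dist)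
  then have "integrable D (\<lambda>\<omega>. g (X t \<omega>))" using XD gm by (simp add: integrable_distr_eq)
  then show "integrable M (\<lambda>\<omega>. indicator E \<omega> * g (X t \<omega>))"
    unfolding D_def using indm gX by (subst (asm) integrable_density) auto
  have "(\<integral>\<omega>. indicator E \<omega> * g (X t \<omega>) \<partial>M) = (\<integral>\<omega>. g (X t \<omega>) \<partial>D)"
    unfolding D_def using indm gX by (subst integral_density) auto
  also have "\<dots> = (\<integral>x. g x \<partial>distr D KN (X t))" using XD gm by (simp add: integral_distr)
  also have "\<dots> = (\<integral>x. g x \<partial>density (Kr s a) (\<lambda>_. ennreal (measure M E)))" by (simp add: dist)
  also have "\<dots> = (\<integral>x. measure M E * g x \<partial>Kr s a)" using gK by (subst integral_density) auto
  also have "\<dots> = measure M E * (\<integral>x. g x \<partial>Kr s a)" by simp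
  finally show "(\<integral>\<omega>. indicator E \<omega> * g (X t \<omega>) \<partial>M) = measure M E * (\<integral>x. g x \<partial>Kr s a)" .
qed

lemma integral_sum2:
  fixes f :: "'s \<Rightarrow> 'a \<Rightarrow> 'w \<Rightarrow> real"
  assumes "\<And>s a. integrable M (f s a)"
  shows "(\<integral>\<omega>. (\<Sum>s\<in>UNIV. \<Sum>a\<in>UNIV. f s a \<omega>) \<partial>M) = (\<Sum>s\<in>UNIV. \<Sum>a\<in>UNIV. \<integral>\<omega>. f s a \<omega> \<partial>M)"
proof -
  have "(\<integral>\<omega>. (\<Sum>s\<in>UNIV. \<Sum>a\<in>UNIV. f s a \<omega>) \<partial>M) = (\<Sum>s\<in>UNIV. \<integral>\<omega>. (\<Sum>a\<in>UNIV. f s a \<omega>) \<partial>M)"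
    by (rule Bochner_Integration.integral_sum) (intro Bochner_Integration.integrable_sum assms)
  also have "\<dots> = (\<Sum>s\<in>UNIV. \<Sum>a\<in>UNIV. \<integral>\<omega>. f s a \<omega> \<partial>M)"
    by (intro sum.cong refl Bochner_Integration.integral_sum assms)
  finally show ?thesis .
qed

definition Esa :: "'w set \<Rightarrow> nat \<Rightarrow> 's \<Rightarrow> 'a \<Rightarrow> 'w set" where
  "Esa E t s a = E \<inter> {\<omega>\<in>space M. S t \<omega> = s \<and> A t \<omega> = a}"

lemma split_sa:
  fixes h :: "'s \<Rightarrow> 'a \<Rightarrow> real"
  assumes "\<omega> \<in> space M"
  shows "indicator E \<omega> * h (S t \<omega>) (A t \<omega>) = (\<Sum>s\<in>UNIV. \<Sum>a\<in>UNIV. indicator (Esa E t s a) \<omega> * h s a)"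
proof -
  have "indicator (Esa E t s a) \<omega> * h s a = (if S t \<omega> = s then (if A t \<omega> = a then indicator E \<omega> * h s a else 0) else 0)" for s a
    using assms by (auto simp: Esa_def indicator_def)
  then have "(\<Sum>s\<in>UNIV. \<Sum>a\<in>UNIV. indicator (Esa E t s a) \<omega> * h s a)
     = (\<Sum>s\<in>UNIV. \<Sum>a\<in>UNIV. if S t \<omega> = s then (if A t \<omega> = a then indicator E \<omega> * h s a else 0) else 0)"
    by presburger
  also have "\<dots> = (\<Sum>s\<in>UNIV. if S t \<omega> = s then (\<Sum>a\<in>UNIV. if A t \<omega> = a then indicator E \<omega> * h s a else 0) else 0)"
  proof (intro sum.cong refl)
    fix s show "(\<Sum>a\<in>UNIV. if S t \<omega> = s then (if A t \<omega> = a then indicator E \<omega> * h s a else 0) else 0)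
      = (if S t \<omega> = s then (\<Sum>a\<in>UNIV. if A t \<omega> = a then indicator E \<omega> * h s a else 0) else 0)"
      by (cases "S t \<omega> = s") simp_all
  qed
  also have "\<dots> = indicator E \<omega> * h (S t \<omega>) (A t \<omega>)"
    by (simp add: sum.delta)
  finally show ?thesis by simp
qed

lemma P1:
  fixes g :: "'s \<Rightarrow> 'a \<Rightarrow> real \<times> 's \<Rightarrow> real"
  assumes E: "E \<in> sets (F t)" and gm: "\<And>s a. g s a \<in> borel_measurable KN"
    and gi: "\<And>s a. integrable (Kr s a) (g s a)"
  shows "integrable M (\<lambda>\<omega>. indicator E \<omega> * g (S t \<omega>) (A t \<omega>) (X t \<omega>))"
    and "(\<integral>\<omega>. indicator E \<omega> * g (S t \<omega>) (A t \<omega>) (X t \<omega>) \<partial>M)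
       = (\<integral>\<omega>. indicator E \<omega> * (\<integral>x. g (S t \<omega>) (A t \<omega>) x \<partial>Kr (S t \<omega>) (A t \<omega>)) \<partial>M)"
proof -
  have EsaF: "Esa E t s a \<in> sets (F t)" for s a unfolding Esa_def by (rule sets_Esa[OF E])
  have EsaM: "Esa E t s a \<in> sets M" for s a by (rule setsF_M[OF EsaF])
  have Esub: "Esa E t s a \<subseteq> {\<omega>\<in>space M. S t \<omega> = s \<and> A t \<omega> = a}" for s a by (auto simp: Esa_def)
  have i1: "integrable M (\<lambda>\<omega>. indicator (Esa E t s a) \<omega> * g s a (X t \<omega>))" for s a
    by (rule P1_sa(1)[OF EsaF Esub gm gi])
  have e1: "(\<integral>\<omega>. indicator (Esa E t s a) \<omega> * g s a (X t \<omega>) \<partial>M) = measure M (Esa E t s a) * (\<integral>x. g s a x \<partial>Kr s a)" for s a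
    by (rule P1_sa(2)[OF EsaF Esub gm gi])
  have eqL: "\<And>\<omega>. \<omega> \<in> space M \<Longrightarrow> indicator E \<omega> * g (S t \<omega>) (A t \<omega>) (X t \<omega>)
      = (\<Sum>s\<in>UNIV. \<Sum>a\<in>UNIV. indicator (Esa E t s a) \<omega> * g s a (X t \<omega>))"
    using split_sa[of _ E "\<lambda>s a. g s a (X t _)"] by simp
  have eqR: "\<And>\<omega>. \<omega> \<in> space M \<Longrightarrow> indicator E \<omega> * (\<integral>x. g (S t \<omega>) (A t \<omega>) x \<partial>Kr (S t \<omega>) (A t \<omega>))
      = (\<Sum>s\<in>UNIV. \<Sum>a\<in>UNIV. indicator (Esa E t s a) \<omega> * (\<integral>x. g s a x \<partial>Kr s a))"
    using split_sa[of _ E "\<lambda>s a. \<integral>x. g s a x \<partial>Kr s a"] by simp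
  have iS: "integrable M (\<lambda>\<omega>. \<Sum>s\<in>UNIV. \<Sum>a\<in>UNIV. indicator (Esa E t s a) \<omega> * g s a (X t \<omega>))"
    by (intro Bochner_Integration.integrable_sum i1)
  show "integrable M (\<lambda>\<omega>. indicator E \<omega> * g (S t \<omega>) (A t \<omega>) (X t \<omega>))"
    using iS by (rule Bochner_Integration.integrable_cong[THEN iffD1, rotated -1]) (auto simp: eqL)
  have iR: "integrable M (\<lambda>\<omega>. indicator (Esa E t s a) \<omega> * (\<integral>x. g s a x \<partial>Kr s a))" for s a
    using EsaM by (intro integrable_mult_left integrable_real_indicator) (auto simp: P.emeasure_finite less_top[symmetric])
  have "(\<integral>\<omega>. indicator E \<omega> * g (S t \<omega>) (A t \<omega>) (X t \<omega>) \<partial>M)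
      = (\<integral>\<omega>. (\<Sum>s\<in>UNIV. \<Sum>a\<in>UNIV. indicator (Esa E t s a) \<omega> * g s a (X t \<omega>)) \<partial>M)"
    by (intro Bochner_Integration.integral_cong) (auto simp: eqL)
  also have "\<dots> = (\<Sum>s\<in>UNIV. \<Sum>a\<in>UNIV. \<integral>\<omega>. indicator (Esa E t s a) \<omega> * g s a (X t \<omega>) \<partial>M)"
    by (rule integral_sum2[OF i1])
  also have "\<dots> = (\<Sum>s\<in>UNIV. \<Sum>a\<in>UNIV. measure M (Esa E t s a) * (\<integral>x. g s a x \<partial>Kr s a))"
    by (simp add: e1)
  also have "\<dots> = (\<Sum>s\<in>UNIV. \<Sum>a\<in>UNIV. \<integral>\<omega>. indicator (Esa E t s a) \<omega> * (\<integral>x. g s a x \<partial>Kr s a) \<partial>M)"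
  proof (intro sum.cong refl)
    fix s a
    have i: "measure M (Esa E t s a \<inter> space M) = measure M (Esa E t s a)"
      using sets.sets_into_space[OF EsaM] by (simp add: Int_absorb2)
    show "measure M (Esa E t s a) * (\<integral>x. g s a x \<partial>Kr s a) = (\<integral>\<omega>. indicator (Esa E t s a) \<omega> * (\<integral>x. g s a x \<partial>Kr s a) \<partial>M)"
      by (simp add: i)
  qed
  also have "\<dots> = (\<integral>\<omega>. (\<Sum>s\<in>UNIV. \<Sum>a\<in>UNIV. indicator (Esa E t s a) \<omega> * (\<integral>x. g s a x \<partial>Kr s a)) \<partial>M)"
    by (rule integral_sum2[OF iR, symmetric])
  also have "\<dots> = (\<integral>\<omega>. indicator E \<omega> * (\<integral>x. g (S t \<omega>) (A t \<omega>) x \<partial>Kr (S t \<omega>) (A t \<omega>)) \<partial>M)"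
    by (intro Bochner_Integration.integral_cong) (auto simp: eqR)
  finally show "(\<integral>\<omega>. indicator E \<omega> * g (S t \<omega>) (A t \<omega>) (X t \<omega>) \<partial>M)
       = (\<integral>\<omega>. indicator E \<omega> * (\<integral>x. g (S t \<omega>) (A t \<omega>) x \<partial>Kr (S t \<omega>) (A t \<omega>)) \<partial>M)" .
qed

end

context mdp
begin

interpretation P: prob_space M by (rule prob)

lemma SA_meas: "(\<lambda>\<omega>. h (S t \<omega>) (A t \<omega>) :: real) \<in> borel_measurable (F t)"
proof (rule measurable_compose_countable'[where g="S t" and I=UNIV])
  fix s
  show "(\<lambda>\<omega>. h s (A t \<omega>)) \<in> borel_measurable (F t)"
    by (rule measurable_compose[OF A_meas]) simp
qed (use S_meas in auto)

lemma fsub: "finite_measure_subalgebra M (F t)"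
  unfolding finite_measure_subalgebra_def finite_measure_subalgebra_axioms_def
  using sub[of t] P.finite_measure_axioms by simp

lemma cond_zero:
  fixes g :: "'s \<Rightarrow> 'a \<Rightarrow> real \<times> 's \<Rightarrow> real"
  assumes gm: "\<And>s a. g s a \<in> borel_measurable KN" and gi: "\<And>s a. integrable (Kr s a) (g s a)"
    and g0: "\<And>s a. (\<integral>x. g s a x \<partial>Kr s a) = 0"
    and gsq: "integrable M (\<lambda>\<omega>. (g (S t \<omega>) (A t \<omega>) (X t \<omega>))\<^sup>2)"
    and \<eta>m: "\<eta> \<in> borel_measurable (F t)" and \<eta>sq: "integrable M (\<lambda>\<omega>. (\<eta> \<omega>)\<^sup>2)"
  shows "(\<integral>\<omega>. \<eta> \<omega> * g (S t \<omega>) (A t \<omega>) (X t \<omega>) \<partial>M) = 0"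
proof -
  interpret FS: finite_measure_subalgebra M "F t" by (rule fsub)
  define u where "u \<omega> = g (S t \<omega>) (A t \<omega>) (X t \<omega>)" for \<omega>
  have um: "u \<in> borel_measurable M"
  proof -
    have "(\<lambda>\<omega>. g (S t \<omega>) (A t \<omega>) (X t \<omega>)) \<in> borel_measurable M"
    proof (rule measurable_compose_countable'[where g="S t" and I=UNIV])
      fix s show "(\<lambda>\<omega>. g s (A t \<omega>) (X t \<omega>)) \<in> borel_measurable M"
      proof (rule measurable_compose_countable'[where g="A t" and I=UNIV])
        fix a show "(\<lambda>\<omega>. g s a (X t \<omega>)) \<in> borel_measurable M"
          using gm[of s a] X_measM by measurable
      qed (use measF_M[OF A_meas] in auto)
    qed (use measF_M[OF S_meas] in auto)
    then show ?thesis by (simp add: u_def[abs_def])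
  qed
  have ui: "integrable M u"
    using P.square_integrable_imp_integrable[OF um] gsq by (simp add: u_def)
  have \<eta>M: "\<eta> \<in> borel_measurable M" by (rule measF_M[OF \<eta>m])
  have ce: "AE \<omega> in M. real_cond_exp M (F t) u \<omega> = 0"
  proof (rule FS.real_cond_exp_charact)
    fix E assume E: "E \<in> sets (F t)"
    have "(\<integral>\<omega>\<in>E. u \<omega> \<partial>M) = (\<integral>\<omega>. indicator E \<omega> * g (S t \<omega>) (A t \<omega>) (X t \<omega>) \<partial>M)"
      by (simp add: set_lebesgue_integral_def u_def)
    also have "\<dots> = (\<integral>\<omega>. indicator E \<omega> * (\<integral>x. g (S t \<omega>) (A t \<omega>) x \<partial>Kr (S t \<omega>) (A t \<omega>)) \<partial>M)"
      by (rule P1(2)[OF E gm gi])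
    also have "\<dots> = 0" by (simp add: g0)
    finally show "(\<integral>\<omega>\<in>E. u \<omega> \<partial>M) = (\<integral>\<omega>\<in>E. 0 \<partial>M)" by simp
  qed (auto simp: ui)
  have "(\<integral>\<omega>. \<eta> \<omega> * u \<omega> \<partial>M) = (\<integral>\<omega>. \<eta> \<omega> * real_cond_exp M (F t) u \<omega> \<partial>M)"
    by (rule FS.real_cond_exp_intg(2)[symmetric]) (use L2_mult[OF \<eta>sq gsq[folded u_def] \<eta>M um] \<eta>m um in auto)
  also have "\<dots> = (\<integral>\<omega>. 0 \<partial>M)"
    by (rule integral_cong_AE) (use ce \<eta>M in auto)
  finally show ?thesis by (simp add: u_def)
qed

end

lemma integrable_ind_space:
  fixes f :: "'w \<Rightarrow> real"
  assumes "integrable M (\<lambda>\<omega>. indicator (space M) \<omega> * f \<omega>)"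
  shows "integrable M f"
proof -
  have "integrable M (\<lambda>\<omega>. indicator (space M) \<omega> * f \<omega>) \<longleftrightarrow> integrable M f"
    by (rule Bochner_Integration.integrable_cong) auto
  then show ?thesis using assms by simp
qed

context mdp
begin

interpretation P: prob_space M by (rule prob)

lemma gSA_meas:
  fixes g :: "'s \<Rightarrow> 'a \<Rightarrow> real \<times> 's \<Rightarrow> real"
  assumes gm: "\<And>s a. g s a \<in> borel_measurable KN"
  shows "(\<lambda>\<omega>. g (S t \<omega>) (A t \<omega>) (X t \<omega>)) \<in> borel_measurable (F (Suc t))"
proof (rule measurable_compose_countable'[where g="S t" and I=UNIV])
  fix s show "(\<lambda>\<omega>. g s (A t \<omega>) (X t \<omega>)) \<in> borel_measurable (F (Suc t))"
  proof (rule measurable_compose_countable'[where g="A t" and I=UNIV])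
    fix a show "(\<lambda>\<omega>. g s a (X t \<omega>)) \<in> borel_measurable (F (Suc t))"
      using gm[of s a] X_meas by measurable
  qed (use measF_mono[OF A_meas] in auto)
qed (use measF_mono[OF S_meas] in auto)

lemma cond_var:
  fixes g :: "'s \<Rightarrow> 'a \<Rightarrow> real \<times> 's \<Rightarrow> real"
  assumes gm: "\<And>s a. g s a \<in> borel_measurable KN" and gi: "\<And>s a. integrable (Kr s a) (g s a)"
    and gnn: "\<And>s a x. 0 \<le> g s a x"
    and \<eta>m: "\<eta> \<in> borel_measurable (F t)" and \<eta>0: "\<And>\<omega>. 0 \<le> \<eta> \<omega>" and \<eta>1: "\<And>\<omega>. \<eta> \<omega> \<le> 1"
  shows "(\<integral>\<omega>. \<eta> \<omega> * g (S t \<omega>) (A t \<omega>) (X t \<omega>) \<partial>M)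
     \<le> (\<Sum>s\<in>UNIV. \<Sum>a\<in>UNIV. \<integral>x. g s a x \<partial>Kr s a) * (\<integral>\<omega>. \<eta> \<omega> \<partial>M)"
proof -
  interpret FS: finite_measure_subalgebra M "F t" by (rule fsub)
  define u where "u \<omega> = g (S t \<omega>) (A t \<omega>) (X t \<omega>)" for \<omega>
  define Gv where "Gv s a = (\<integral>x. g s a x \<partial>Kr s a)" for s a
  define Cs where "Cs = (\<Sum>s\<in>UNIV. \<Sum>a\<in>UNIV. Gv s a)"
  have Gnn: "0 \<le> Gv s a" for s a unfolding Gv_def by (intro integral_nonneg_AE) (auto simp: gnn)
  have GC: "Gv s a \<le> Cs" for s a unfolding Cs_def by (rule le_sum2[of Gv]) (rule Gnn)
  have um: "u \<in> borel_measurable M" unfolding u_def[abs_def] by (rule measF_M[OF gSA_meas[OF gm]])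
  have spF: "space M \<in> sets (F t)" using sets.top[of "F t"] by (simp add: spaceF)
  have ui: "integrable M u"
  proof -
    have "integrable M (\<lambda>\<omega>. indicator (space M) \<omega> * g (S t \<omega>) (A t \<omega>) (X t \<omega>))"
      by (rule P1(1)[OF spF gm gi])
    then show ?thesis unfolding u_def[abs_def] by (rule integrable_ind_space)
  qed
  have GSm: "(\<lambda>\<omega>. Gv (S t \<omega>) (A t \<omega>)) \<in> borel_measurable (F t)" by (rule SA_meas)
  have GSM: "(\<lambda>\<omega>. Gv (S t \<omega>) (A t \<omega>)) \<in> borel_measurable M" by (rule measF_M[OF GSm])
  have GSi: "integrable M (\<lambda>\<omega>. Gv (S t \<omega>) (A t \<omega>))"
    by (rule P.integrable_const_bound[where B=Cs]) (use GSM Gnn GC in auto)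
  have ce: "AE \<omega> in M. real_cond_exp M (F t) u \<omega> = Gv (S t \<omega>) (A t \<omega>)"
  proof (rule FS.real_cond_exp_charact)
    fix E assume E: "E \<in> sets (F t)"
    have "(\<integral>\<omega>\<in>E. u \<omega> \<partial>M) = (\<integral>\<omega>. indicator E \<omega> * g (S t \<omega>) (A t \<omega>) (X t \<omega>) \<partial>M)"
      by (simp add: set_lebesgue_integral_def u_def)
    also have "\<dots> = (\<integral>\<omega>. indicator E \<omega> * (\<integral>x. g (S t \<omega>) (A t \<omega>) x \<partial>Kr (S t \<omega>) (A t \<omega>)) \<partial>M)"
      by (rule P1(2)[OF E gm gi])
    finally show "(\<integral>\<omega>\<in>E. u \<omega> \<partial>M) = (\<integral>\<omega>\<in>E. Gv (S t \<omega>) (A t \<omega>) \<partial>M)"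
      by (simp add: set_lebesgue_integral_def Gv_def)
  qed (use ui GSi GSm in auto)
  have \<eta>M: "\<eta> \<in> borel_measurable M" by (rule measF_M[OF \<eta>m])
  have \<eta>ui: "integrable M (\<lambda>\<omega>. \<eta> \<omega> * u \<omega>)"
    by (rule Bochner_Integration.integrable_bound[OF ui]) (use \<eta>M um \<eta>0 \<eta>1 in \<open>auto simp: abs_mult intro!: mult_left_le_one_le\<close>)
  have \<eta>i: "integrable M \<eta>"
    by (rule P.integrable_const_bound[where B=1]) (use \<eta>M \<eta>0 \<eta>1 in auto)
  have "(\<integral>\<omega>. \<eta> \<omega> * u \<omega> \<partial>M) = (\<integral>\<omega>. \<eta> \<omega> * real_cond_exp M (F t) u \<omega> \<partial>M)"
    by (rule FS.real_cond_exp_intg(2)[symmetric]) (use \<eta>ui \<eta>m um in auto)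
  also have "\<dots> = (\<integral>\<omega>. \<eta> \<omega> * Gv (S t \<omega>) (A t \<omega>) \<partial>M)"
    by (rule integral_cong_AE) (use ce \<eta>M GSM in auto)
  also have "\<dots> \<le> (\<integral>\<omega>. \<eta> \<omega> * Cs \<partial>M)"
  proof (rule integral_mono)
    show "integrable M (\<lambda>\<omega>. \<eta> \<omega> * Gv (S t \<omega>) (A t \<omega>))"
      by (rule Bochner_Integration.integrable_bound[OF GSi]) (use \<eta>M GSM \<eta>0 \<eta>1 Gnn in \<open>auto simp: abs_mult intro!: mult_left_le_one_le\<close>)
    show "integrable M (\<lambda>\<omega>. \<eta> \<omega> * Cs)" using \<eta>i by simp
    show "\<eta> \<omega> * Gv (S t \<omega>) (A t \<omega>) \<le> \<eta> \<omega> * Cs" for \<omega> using \<eta>0 GC by (intro mult_left_mono) auto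
  qed
  also have "\<dots> = Cs * (\<integral>\<omega>. \<eta> \<omega> \<partial>M)" by (simp add: mult.commute)
  finally show ?thesis by (simp add: u_def Cs_def Gv_def)
qed

end

context mdp
begin

interpretation P: prob_space M by (rule prob)

lemma space_Kr: "space (Kr s a) = UNIV"
proof -
  have "space (Kr s a) = space KN" by (rule sets_eq_imp_space_eq[OF Kr_sets])
  then show ?thesis by (simp add: space_pair_measure)
qed

lemma bm_Kr: "f \<in> borel_measurable KN \<Longrightarrow> f \<in> borel_measurable (Kr s a)"
  using Kr_sets[of s a] by (simp cong: measurable_cong_sets)

lemma fst_int: "integrable (Kr s a) fst"
proof -
  interpret K: prob_space "Kr s a" by (rule Kr_prob)
  have "fst \<in> borel_measurable KN" by measurable
  then show ?thesis using K.square_integrable_imp_integrable[OF bm_Kr] Kr_var by blast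
qed

definition gu :: "'s \<Rightarrow> 'a \<Rightarrow> real \<times> 's \<Rightarrow> real" where
  "gu s a x = fst x - exp_reward Kr s a"

definition gu2 :: "'s \<Rightarrow> 'a \<Rightarrow> real \<times> 's \<Rightarrow> real" where
  "gu2 s a x = (fst x - exp_reward Kr s a)\<^sup>2"

lemma gu_m: "gu s a \<in> borel_measurable KN" unfolding gu_def[abs_def] by measurable
lemma gu2_m: "gu2 s a \<in> borel_measurable KN" unfolding gu2_def[abs_def] by measurable

lemma gu_int: "integrable (Kr s a) (gu s a)"
  unfolding gu_def[abs_def] using fst_int Kr_prob[of s a]
  by (intro Bochner_Integration.integrable_diff) (auto simp: prob_space.finite_measure finite_measure.integrable_const)

lemma gu2_int: "integrable (Kr s a) (gu2 s a)"
proof -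
  interpret K: prob_space "Kr s a" by (rule Kr_prob)
  have "integrable (Kr s a) (\<lambda>x. (fst x)\<^sup>2 - 2 * exp_reward Kr s a * fst x + (exp_reward Kr s a)\<^sup>2)"
    using fst_int Kr_var by auto
  moreover have "(\<lambda>x. (fst x)\<^sup>2 - 2 * exp_reward Kr s a * fst x + (exp_reward Kr s a)\<^sup>2) = gu2 s a"
    by (rule ext) (simp add: gu2_def power2_diff algebra_simps)
  ultimately show ?thesis by simp
qed

lemma gu0: "(\<integral>x. gu s a x \<partial>Kr s a) = 0"
proof -
  interpret K: prob_space "Kr s a" by (rule Kr_prob)
  show ?thesis unfolding gu_def using fst_int by (simp add: exp_reward_def K.prob_space)
qed

definition u :: "nat \<Rightarrow> 'w \<Rightarrow> real" where
  "u t \<omega> = Rw t \<omega> - exp_reward Kr (S t \<omega>) (A t \<omega>)"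

lemma u_eq: "u t \<omega> = gu (S t \<omega>) (A t \<omega>) (X t \<omega>)" by (simp add: u_def gu_def X_def)
lemma u2_eq: "(u t \<omega>)\<^sup>2 = gu2 (S t \<omega>) (A t \<omega>) (X t \<omega>)" by (simp add: u_def gu2_def X_def)

lemma u_meas: "u t \<in> borel_measurable (F (Suc t))"
  unfolding u_eq[abs_def] by (rule gSA_meas[OF gu_m])

lemma u_sq: "integrable M (\<lambda>\<omega>. (u t \<omega>)\<^sup>2)"
proof -
  have spF: "space M \<in> sets (F t)" using sets.top[of "F t"] by (simp add: spaceF)
  have "integrable M (\<lambda>\<omega>. indicator (space M) \<omega> * gu2 (S t \<omega>) (A t \<omega>) (X t \<omega>))"
    by (rule P1(1)[OF spF gu2_m gu2_int])
  then show ?thesis unfolding u2_eq by (rule integrable_ind_space)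
qed

lemma u_orth:
  assumes "\<eta> \<in> borel_measurable (F t)" "integrable M (\<lambda>\<omega>. (\<eta> \<omega>)\<^sup>2)"
  shows "(\<integral>\<omega>. \<eta> \<omega> * u t \<omega> \<partial>M) = 0"
  unfolding u_eq by (rule cond_zero[OF gu_m gu_int gu0 _ assms]) (use u_sq[of t] in \<open>simp add: u_eq\<close>)

lemma u_var:
  assumes "\<eta> \<in> borel_measurable (F t)" "\<And>\<omega>. 0 \<le> \<eta> \<omega>" "\<And>\<omega>. \<eta> \<omega> \<le> 1"
  shows "(\<integral>\<omega>. \<eta> \<omega> * (u t \<omega>)\<^sup>2 \<partial>M) \<le> (\<Sum>s\<in>UNIV. \<Sum>a\<in>UNIV. \<integral>x. gu2 s a x \<partial>Kr s a) * (\<integral>\<omega>. \<eta> \<omega> \<partial>M)"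
  unfolding u2_eq by (rule cond_var[OF gu2_m gu2_int _ assms]) (simp add: gu2_def)

end

context mdp
begin

interpretation P: prob_space M by (rule prob)

definition ge :: "'s \<Rightarrow> 's \<Rightarrow> 'a \<Rightarrow> real \<times> 's \<Rightarrow> real" where
  "ge s' s a x = indicator {s'} (snd x) - trans_prob Kr s a s'"

lemma ge_m: "ge s' s a \<in> borel_measurable KN" unfolding ge_def[abs_def] by measurable

lemma trans_sets: "UNIV \<times> {s'} \<in> sets (Kr s a)"
  using Kr_sets[of s a] by (simp add: pair_measureI)

lemma trans_nn: "0 \<le> trans_prob Kr s a s'" by (simp add: trans_prob_def)

lemma trans_le1: "trans_prob Kr s a s' \<le> 1"
  unfolding trans_prob_def using prob_space.prob_le_1[OF Kr_prob] .

lemma trans_sum: "(\<Sum>s'\<in>UNIV. trans_prob Kr s a s') = 1"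
proof -
  interpret K: prob_space "Kr s a" by (rule Kr_prob)
  have "(\<Sum>s'\<in>UNIV. trans_prob Kr s a s') = measure (Kr s a) (\<Union>s'\<in>UNIV. UNIV \<times> {s'})"
    unfolding trans_prob_def
    by (rule measure_finite_Union[symmetric]) (auto simp: trans_sets disjoint_family_on_def K.emeasure_finite)
  also have "(\<Union>s'\<in>UNIV. UNIV \<times> {s'}) = space (Kr s a)" by (auto simp: space_Kr)
  finally show ?thesis by (simp add: K.prob_space)
qed

lemma ge_bound: "\<bar>ge s' s a x\<bar> \<le> 1"
  using trans_nn[of s a s'] trans_le1[of s a s'] by (auto simp: ge_def indicator_def)

lemma ge_int: "integrable (Kr s a) (ge s' s a)"
  by (rule finite_measure.integrable_const_bound[where B=1])
     (use Kr_prob[of s a] ge_bound bm_Kr[OF ge_m] in \<open>auto simp: prob_space.finite_measure\<close>)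

lemma ge0: "(\<integral>x. ge s' s a x \<partial>Kr s a) = 0"
proof -
  interpret K: prob_space "Kr s a" by (rule Kr_prob)
  have i: "(\<lambda>x. indicator {s'} (snd x) :: real) = indicator (UNIV \<times> {s'})"
    by (auto simp: indicator_def fun_eq_iff)
  have "(\<integral>x. indicator {s'} (snd x) \<partial>Kr s a) = measure (Kr s a) (UNIV \<times> {s'})"
    unfolding i by (simp add: space_Kr)
  then show ?thesis unfolding ge_def
    by (subst Bochner_Integration.integral_diff) (auto simp: trans_prob_def i trans_sets K.emeasure_finite less_top[symmetric] K.prob_space)
qed

lemma zeta_facts:
  fixes c :: "'s \<Rightarrow> 'w \<Rightarrow> real"
  assumes cm: "\<And>s'. c s' \<in> borel_measurable (F t)" and cb: "\<And>s' \<omega>. \<bar>c s' \<omega>\<bar> \<le> B"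
  defines "\<zeta> \<equiv> (\<lambda>\<omega>. \<Sum>s'\<in>UNIV. c s' \<omega> * ge s' (S t \<omega>) (A t \<omega>) (X t \<omega>))"
  shows "\<zeta> \<in> borel_measurable (F (Suc t))"
    and "\<And>\<omega>. \<bar>\<zeta> \<omega>\<bar> \<le> B * real CARD('s)"
    and "integrable M (\<lambda>\<omega>. (\<zeta> \<omega>)\<^sup>2)"
    and "\<And>\<eta>. \<eta> \<in> borel_measurable (F t) \<Longrightarrow> integrable M (\<lambda>\<omega>. (\<eta> \<omega>)\<^sup>2) \<Longrightarrow> (\<integral>\<omega>. \<eta> \<omega> * \<zeta> \<omega> \<partial>M) = 0"
    and "\<And>\<eta>. \<eta> \<in> borel_measurable (F t) \<Longrightarrow> (\<And>\<omega>. 0 \<le> \<eta> \<omega>) \<Longrightarrow> (\<And>\<omega>. \<eta> \<omega> \<le> 1) \<Longrightarrow>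
        (\<integral>\<omega>. \<eta> \<omega> * (\<zeta> \<omega>)\<^sup>2 \<partial>M) \<le> (B * real CARD('s))\<^sup>2 * (\<integral>\<omega>. \<eta> \<omega> \<partial>M)"
proof -
  have gm: "(\<lambda>\<omega>. ge s' (S t \<omega>) (A t \<omega>) (X t \<omega>)) \<in> borel_measurable (F (Suc t))" for s'
    by (rule gSA_meas[OF ge_m])
  have cm': "c s' \<in> borel_measurable (F (Suc t))" for s' using measF_mono[OF cm] by simp
  show zm: "\<zeta> \<in> borel_measurable (F (Suc t))" unfolding \<zeta>_def using gm cm' by measurable
  have zM: "\<zeta> \<in> borel_measurable M" by (rule measF_M[OF zm])
  show zb: "\<bar>\<zeta> \<omega>\<bar> \<le> B * real CARD('s)" for \<omega>
  proof -
    have "\<bar>\<zeta> \<omega>\<bar> \<le> (\<Sum>s'\<in>UNIV. \<bar>c s' \<omega> * ge s' (S t \<omega>) (A t \<omega>) (X t \<omega>)\<bar>)" unfolding \<zeta>_def by (rule sum_abs)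
    also have "\<dots> \<le> (\<Sum>s'\<in>(UNIV::'s set). B)"
    proof (intro sum_mono)
      fix s'
      have "\<bar>c s' \<omega>\<bar> * \<bar>ge s' (S t \<omega>) (A t \<omega>) (X t \<omega>)\<bar> \<le> B * 1"
        using cb[of s' \<omega>] ge_bound by (intro mult_mono) auto
      then show "\<bar>c s' \<omega> * ge s' (S t \<omega>) (A t \<omega>) (X t \<omega>)\<bar> \<le> B" by (simp add: abs_mult)
    qed
    finally show ?thesis by (simp add: mult.commute)
  qed
  have z2b: "(\<zeta> \<omega>)\<^sup>2 \<le> (B * real CARD('s))\<^sup>2" for \<omega>
    using zb[of \<omega>] by (metis abs_ge_zero order_trans power2_abs power_mono)
  show zsq: "integrable M (\<lambda>\<omega>. (\<zeta> \<omega>)\<^sup>2)"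
    by (rule P.integrable_const_bound[where B="(B * real CARD('s))\<^sup>2"]) (use zM z2b in auto)
  have gsq: "integrable M (\<lambda>\<omega>. (ge s' (S t \<omega>) (A t \<omega>) (X t \<omega>))\<^sup>2)" for s'
  proof (rule P.integrable_const_bound[where B=1])
    show "AE \<omega> in M. norm ((ge s' (S t \<omega>) (A t \<omega>) (X t \<omega>))\<^sup>2) \<le> 1"
      using ge_bound by (auto simp: abs_square_le_1)
    show "(\<lambda>\<omega>. (ge s' (S t \<omega>) (A t \<omega>) (X t \<omega>))\<^sup>2) \<in> borel_measurable M" using measF_M[OF gm[of s']] by measurable
  qed
  show "(\<integral>\<omega>. \<eta> \<omega> * \<zeta> \<omega> \<partial>M) = 0" if \<eta>m: "\<eta> \<in> borel_measurable (F t)" and \<eta>sq: "integrable M (\<lambda>\<omega>. (\<eta> \<omega>)\<^sup>2)" for \<eta>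
  proof -
    have \<eta>M: "\<eta> \<in> borel_measurable M" by (rule measF_M[OF \<eta>m])
    have ecm: "(\<lambda>\<omega>. \<eta> \<omega> * c s' \<omega>) \<in> borel_measurable (F t)" for s' using \<eta>m cm by measurable
    have ecsq: "integrable M (\<lambda>\<omega>. (\<eta> \<omega> * c s' \<omega>)\<^sup>2)" for s'
    proof (rule Bochner_Integration.integrable_bound[where f="\<lambda>\<omega>. B\<^sup>2 * (\<eta> \<omega>)\<^sup>2"])
      show "integrable M (\<lambda>\<omega>. B\<^sup>2 * (\<eta> \<omega>)\<^sup>2)" using \<eta>sq by simp
      show "(\<lambda>\<omega>. (\<eta> \<omega> * c s' \<omega>)\<^sup>2) \<in> borel_measurable M" using \<eta>M measF_M[OF cm] by measurable
      show "AE \<omega> in M. norm ((\<eta> \<omega> * c s' \<omega>)\<^sup>2) \<le> norm (B\<^sup>2 * (\<eta> \<omega>)\<^sup>2)"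
      proof (intro AE_I2)
        fix \<omega>
        have "(c s' \<omega>)\<^sup>2 \<le> B\<^sup>2" using cb[of s' \<omega>] by (metis abs_ge_zero order_trans power2_abs power_mono)
        then have "(c s' \<omega>)\<^sup>2 * (\<eta> \<omega>)\<^sup>2 \<le> B\<^sup>2 * (\<eta> \<omega>)\<^sup>2" by (intro mult_right_mono) auto
        then show "norm ((\<eta> \<omega> * c s' \<omega>)\<^sup>2) \<le> norm (B\<^sup>2 * (\<eta> \<omega>)\<^sup>2)" by (simp add: power_mult_distrib mult.commute)
      qed
    qed
    have each: "(\<integral>\<omega>. (\<eta> \<omega> * c s' \<omega>) * ge s' (S t \<omega>) (A t \<omega>) (X t \<omega>) \<partial>M) = 0" for s'
      by (rule cond_zero[OF ge_m ge_int ge0 gsq ecm ecsq])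
    have ii: "integrable M (\<lambda>\<omega>. (\<eta> \<omega> * c s' \<omega>) * ge s' (S t \<omega>) (A t \<omega>) (X t \<omega>))" for s'
      by (rule L2_mult[OF ecsq gsq]) (use \<eta>M measF_M[OF cm] measF_M[OF gm] in auto)
    have "(\<integral>\<omega>. \<eta> \<omega> * \<zeta> \<omega> \<partial>M) = (\<integral>\<omega>. (\<Sum>s'\<in>UNIV. (\<eta> \<omega> * c s' \<omega>) * ge s' (S t \<omega>) (A t \<omega>) (X t \<omega>)) \<partial>M)"
      unfolding \<zeta>_def by (simp add: sum_distrib_left mult.assoc)
    also have "\<dots> = (\<Sum>s'\<in>UNIV. \<integral>\<omega>. (\<eta> \<omega> * c s' \<omega>) * ge s' (S t \<omega>) (A t \<omega>) (X t \<omega>) \<partial>M)"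
      by (rule Bochner_Integration.integral_sum) (rule ii)
    also have "\<dots> = 0" by (simp add: each)
    finally show ?thesis .
  qed
  show "(\<integral>\<omega>. \<eta> \<omega> * (\<zeta> \<omega>)\<^sup>2 \<partial>M) \<le> (B * real CARD('s))\<^sup>2 * (\<integral>\<omega>. \<eta> \<omega> \<partial>M)"
    if \<eta>m: "\<eta> \<in> borel_measurable (F t)" and \<eta>0: "\<And>\<omega>. 0 \<le> \<eta> \<omega>" and \<eta>1: "\<And>\<omega>. \<eta> \<omega> \<le> 1" for \<eta>
  proof -
    have \<eta>M: "\<eta> \<in> borel_measurable M" by (rule measF_M[OF \<eta>m])
    have \<eta>i: "integrable M \<eta>" by (rule P.integrable_const_bound[where B=1]) (use \<eta>M \<eta>0 \<eta>1 in auto)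
    have "(\<integral>\<omega>. \<eta> \<omega> * (\<zeta> \<omega>)\<^sup>2 \<partial>M) \<le> (\<integral>\<omega>. \<eta> \<omega> * (B * real CARD('s))\<^sup>2 \<partial>M)"
    proof (rule integral_mono)
      show "integrable M (\<lambda>\<omega>. \<eta> \<omega> * (\<zeta> \<omega>)\<^sup>2)"
        by (rule Bochner_Integration.integrable_bound[OF zsq]) (use \<eta>M zM \<eta>0 \<eta>1 in \<open>auto simp: abs_mult intro!: mult_left_le_one_le\<close>)
      show "integrable M (\<lambda>\<omega>. \<eta> \<omega> * (B * real CARD('s))\<^sup>2)" using \<eta>i by simp
      show "\<eta> \<omega> * (\<zeta> \<omega>)\<^sup>2 \<le> \<eta> \<omega> * (B * real CARD('s))\<^sup>2" for \<omega> using \<eta>0 z2b by (intro mult_left_mono) auto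
    qed
    then show ?thesis by (simp add: mult.commute)
  qed
qed

end

context mdp
begin

lemma tables_meas:
  fixes \<alpha> :: "nat \<Rightarrow> 's \<Rightarrow> 'a \<Rightarrow> 'w \<Rightarrow> real" and aK :: "nat \<Rightarrow> 'w \<Rightarrow> 'a"
  assumes alpha_meas: "\<And>t s a. \<alpha> t s a \<in> borel_measurable (F t)"
    and aK_meas: "\<And>t. aK t \<in> measurable (F (Suc t)) (count_space UNIV)"
  shows "\<forall>s a. (\<lambda>\<omega>. fst (acdq_tables \<gamma> QA0 QB0 S Rw \<alpha> aK t \<omega>) s a) \<in> borel_measurable (F t)
     \<and> (\<lambda>\<omega>. snd (acdq_tables \<gamma> QA0 QB0 S Rw \<alpha> aK t \<omega>) s a) \<in> borel_measurable (F t)"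
proof (induction t)
  case 0 then show ?case by simp
next
  case (Suc t)
  define QA where "QA \<omega> = fst (acdq_tables \<gamma> QA0 QB0 S Rw \<alpha> aK t \<omega>)" for \<omega>
  define QB where "QB \<omega> = snd (acdq_tables \<gamma> QA0 QB0 S Rw \<alpha> aK t \<omega>)" for \<omega>
  have mA: "(\<lambda>\<omega>. QA \<omega> s a) \<in> borel_measurable (F (Suc t))" for s a
    using measF_mono[of "\<lambda>\<omega>. QA \<omega> s a" t borel "Suc t"] Suc by (simp add: QA_def)
  have mB: "(\<lambda>\<omega>. QB \<omega> s a) \<in> borel_measurable (F (Suc t))" for s a
    using measF_mono[of "\<lambda>\<omega>. QB \<omega> s a" t borel "Suc t"] Suc by (simp add: QB_def)
  have mal: "\<alpha> t s a \<in> borel_measurable (F (Suc t))" for s a using measF_mono[OF alpha_meas] by simp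
  have mR: "Rw t \<in> borel_measurable (F (Suc t))" by (rule R_meas)
  have mS: "S (Suc t) \<in> measurable (F (Suc t)) (count_space UNIV)" by (rule S_meas)
  have m2: "(\<lambda>\<omega>. QB \<omega> (S (Suc t) \<omega>) (aK t \<omega>)) \<in> borel_measurable (F (Suc t))"
  proof (rule measurable_compose_countable'[where g="S (Suc t)" and I=UNIV])
    fix s show "(\<lambda>\<omega>. QB \<omega> s (aK t \<omega>)) \<in> borel_measurable (F (Suc t))"
      by (rule measurable_compose_countable'[where g="aK t" and I=UNIV]) (use mB aK_meas in auto)
  qed (use mS in auto)
  have m3: "(\<lambda>\<omega>. Max (range (QA \<omega> (S (Suc t) \<omega>)))) \<in> borel_measurable (F (Suc t))"
  proof (rule measurable_compose_countable'[where g="S (Suc t)" and I=UNIV])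
    fix s show "(\<lambda>\<omega>. Max (range (QA \<omega> s))) \<in> borel_measurable (F (Suc t))"
      using borel_measurable_Max[of UNIV "\<lambda>a \<omega>. QA \<omega> s a" "F (Suc t)"] mA by simp
  qed (use mS in auto)
  have eqA: "fst (acdq_tables \<gamma> QA0 QB0 S Rw \<alpha> aK (Suc t) \<omega>) s a
     = QA \<omega> s a + \<alpha> t s a \<omega> * (Rw t \<omega> + \<gamma> * min (QB \<omega> (S (Suc t) \<omega>) (aK t \<omega>)) (Max (range (QA \<omega> (S (Suc t) \<omega>)))) - QA \<omega> s a)"
    for \<omega> s a by (simp add: QA_def QB_def Let_def)
  have eqB: "snd (acdq_tables \<gamma> QA0 QB0 S Rw \<alpha> aK (Suc t) \<omega>) s a
     = QB \<omega> s a + \<alpha> t s a \<omega> * (Rw t \<omega> + \<gamma> * min (QB \<omega> (S (Suc t) \<omega>) (aK t \<omega>)) (Max (range (QA \<omega> (S (Suc t) \<omega>)))) - QB \<omega> s a)"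
    for \<omega> s a by (simp add: QA_def QB_def Let_def)
  show ?case
  proof (intro allI conjI)
    fix s a
    show "(\<lambda>\<omega>. fst (acdq_tables \<gamma> QA0 QB0 S Rw \<alpha> aK (Suc t) \<omega>) s a) \<in> borel_measurable (F (Suc t))"
      unfolding eqA using mA[of s a] mal[of s a] mR m2 m3 by measurable
    show "(\<lambda>\<omega>. snd (acdq_tables \<gamma> QA0 QB0 S Rw \<alpha> aK (Suc t) \<omega>) s a) \<in> borel_measurable (F (Suc t))"
      unfolding eqB using mB[of s a] mal[of s a] mR m2 m3 by measurable
  qed
qed

lemma sum_ind_single:
  fixes f :: "'s \<Rightarrow> real"
  shows "(\<Sum>s'\<in>UNIV. f s' * indicator {s'} x) = f x"
proof -
  have "(\<Sum>s'\<in>UNIV. f s' * indicator {s'} x) = (\<Sum>s'\<in>UNIV. if x = s' then f s' else 0)"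
    by (intro sum.cong) (auto simp: indicator_def)
  then show ?thesis by simp
qed

lemma v_ident:
  fixes c :: "'s \<Rightarrow> real"
  shows "\<gamma> * (c (S (Suc t) \<omega>) - (\<Sum>s'\<in>UNIV. trans_prob Kr (S t \<omega>) (A t \<omega>) s' * c s'))
    = (\<Sum>s'\<in>UNIV. (\<gamma> * c s') * ge s' (S t \<omega>) (A t \<omega>) (X t \<omega>))"
proof -
  have "(\<Sum>s'\<in>UNIV. (\<gamma> * c s') * ge s' (S t \<omega>) (A t \<omega>) (X t \<omega>))
      = (\<Sum>s'\<in>UNIV. (\<gamma> * c s') * indicator {s'} (S (Suc t) \<omega>)) - (\<Sum>s'\<in>UNIV. (\<gamma> * c s') * trans_prob Kr (S t \<omega>) (A t \<omega>) s')"
    by (simp add: ge_def X_def right_diff_distrib sum_subtractf)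
  also have "(\<Sum>s'\<in>UNIV. (\<gamma> * c s') * indicator {s'} (S (Suc t) \<omega>)) = \<gamma> * c (S (Suc t) \<omega>)"
    by (rule sum_ind_single)
  also have "(\<Sum>s'\<in>UNIV. (\<gamma> * c s') * trans_prob Kr (S t \<omega>) (A t \<omega>) s') = \<gamma> * (\<Sum>s'\<in>UNIV. trans_prob Kr (S t \<omega>) (A t \<omega>) s' * c s')"
    by (simp add: sum_distrib_left mult_ac)
  finally show ?thesis by (simp add: right_diff_distrib)
qed

end

theorem theorem3:
  fixes M :: "'w measure"
    and F :: "nat \<Rightarrow> 'w measure"
    and Kr :: "'s::finite \<Rightarrow> 'a::finite \<Rightarrow> (real \<times> 's) measure"
    and \<gamma> :: real and K :: nat
    and S :: "nat \<Rightarrow> 'w \<Rightarrow> 's" and A :: "nat \<Rightarrow> 'w \<Rightarrow> 'a" and Rw :: "nat \<Rightarrow> 'w \<Rightarrow> real"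
    and \<alpha> :: "nat \<Rightarrow> 's \<Rightarrow> 'a \<Rightarrow> 'w \<Rightarrow> real"
    and aK :: "nat \<Rightarrow> 'w \<Rightarrow> 'a"
    and QA0 QB0 Qstar :: "'s \<Rightarrow> 'a \<Rightarrow> real"
  assumes prob: "prob_space M"
    and filt: "filtration (space M) F" and sub: "\<And>t. subalgebra M (F t)"
    and Kr_prob: "\<And>s a. prob_space (Kr s a)"
    and Kr_sets: "\<And>s a. sets (Kr s a) = sets (borel \<Otimes>\<^sub>M count_space UNIV)"
    and Kr_var: "\<And>s a. integrable (Kr s a) (\<lambda>x. (fst x)\<^sup>2)"
    and gamma: "0 \<le> \<gamma>" "\<gamma> < 1"
    and K: "1 \<le> K" "K \<le> CARD('a)"
    and S_meas: "\<And>t. S t \<in> measurable (F t) (count_space UNIV)"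
    and A_meas: "\<And>t. A t \<in> measurable (F t) (count_space UNIV)"
    and R_meas: "\<And>t. Rw t \<in> borel_measurable (F (Suc t))"
    and alpha_meas: "\<And>t s a. \<alpha> t s a \<in> borel_measurable (F t)"
    and sample_law: "\<And>t E B. E \<in> sets (F t) \<Longrightarrow> B \<in> sets (borel \<Otimes>\<^sub>M count_space UNIV) \<Longrightarrow>
        measure M (E \<inter> {\<omega> \<in> space M. (Rw t \<omega>, S (Suc t) \<omega>) \<in> B})
          = (\<integral>\<omega>. indicator E \<omega> * measure (Kr (S t \<omega>) (A t \<omega>)) B \<partial>M)"
    and aK_meas: "\<And>t. aK t \<in> measurable (F (Suc t)) (count_space UNIV)"
    and aK_sel: "\<And>t \<omega>. \<omega> \<in> space M \<Longrightarrow>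
        (let QA = fst (acdq_tables \<gamma> QA0 QB0 S Rw \<alpha> aK t \<omega>);
             QB = snd (acdq_tables \<gamma> QA0 QB0 S Rw \<alpha> aK t \<omega>);
             s' = S (Suc t) \<omega>
         in aK t \<omega> \<in> topK K (QB s') \<and> (\<forall>b\<in>topK K (QB s'). QA s' b \<le> QA s' (aK t \<omega>)))"
    and inf_visits: "\<And>s a. AE \<omega> in M. infinite {t. S t \<omega> = s \<and> A t \<omega> = a}"
    and alpha_range: "AE \<omega> in M. \<forall>t s a. 0 \<le> \<alpha> t s a \<omega> \<and> \<alpha> t s a \<omega> \<le> 1"
    and alpha_zero: "AE \<omega> in M. \<forall>t s a. (s, a) \<noteq> (S t \<omega>, A t \<omega>) \<longrightarrow> \<alpha> t s a \<omega> = 0"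
    and alpha_sum: "AE \<omega> in M. \<forall>s a. \<not> summable (\<lambda>t. \<alpha> t s a \<omega>)"
    and alpha_sq: "AE \<omega> in M. \<forall>s a. summable (\<lambda>t. (\<alpha> t s a \<omega>)\<^sup>2)"
    and Qstar: "is_optimal_Q Kr \<gamma> Qstar"
  shows "AE \<omega> in M. \<forall>s a.
           (\<lambda>t. fst (acdq_tables \<gamma> QA0 QB0 S Rw \<alpha> aK t \<omega>) s a) \<longlonglongrightarrow> Qstar s a \<and>
           (\<lambda>t. snd (acdq_tables \<gamma> QA0 QB0 S Rw \<alpha> aK t \<omega>) s a) \<longlonglongrightarrow> Qstar s a"
proof -
  interpret mdp M F Kr S A Rw
    by (rule mdp.intro[OF prob filt sub Kr_prob Kr_sets Kr_var S_meas A_meas R_meas sample_law])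
  interpret P: prob_space M by (rule prob)
  have monoF: "\<And>i j. i \<le> j \<Longrightarrow> sets (F i) \<subseteq> sets (F j)" using filtration.sets_F_mono[OF filt] by blast
  have TM: "\<forall>s a. (\<lambda>\<omega>. fst (acdq_tables \<gamma> QA0 QB0 S Rw \<alpha> aK t \<omega>) s a) \<in> borel_measurable (F t)
     \<and> (\<lambda>\<omega>. snd (acdq_tables \<gamma> QA0 QB0 S Rw \<alpha> aK t \<omega>) s a) \<in> borel_measurable (F t)" for t
    by (rule tables_meas[OF alpha_meas aK_meas])
  have b01: "AE \<omega> in M. \<forall>k. 0 \<le> \<alpha> k s a \<omega> \<and> \<alpha> k s a \<omega> \<le> 1" for s a
    using alpha_range by eventually_elim auto
  have bsq: "AE \<omega> in M. summable (\<lambda>k. (\<alpha> k s a \<omega>)\<^sup>2)" for s a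
    using alpha_sq by eventually_elim auto
  have AU: "AE \<omega> in M. summable (\<lambda>k. \<alpha> k s a \<omega> * u k \<omega>)" for s a
  proof (rule mart_summable[where G=F and C="\<Sum>s\<in>UNIV. \<Sum>a\<in>UNIV. \<integral>x. gu2 s a x \<partial>Kr s a"])
    show "\<And>k \<eta>. \<eta> \<in> borel_measurable (F k) \<Longrightarrow> integrable M (\<lambda>\<omega>. (\<eta> \<omega>)\<^sup>2) \<Longrightarrow> (\<integral>\<omega>. \<eta> \<omega> * u k \<omega> \<partial>M) = 0"
      by (rule u_orth)
    show "\<And>k \<eta>. \<eta> \<in> borel_measurable (F k) \<Longrightarrow> (\<And>\<omega>. 0 \<le> \<eta> \<omega>) \<Longrightarrow> (\<And>\<omega>. \<eta> \<omega> \<le> 1) \<Longrightarrow>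
        (\<integral>\<omega>. \<eta> \<omega> * (u k \<omega>)\<^sup>2 \<partial>M) \<le> (\<Sum>s\<in>UNIV. \<Sum>a\<in>UNIV. \<integral>x. gu2 s a x \<partial>Kr s a) * (\<integral>\<omega>. \<eta> \<omega> \<partial>M)"
      by (rule u_var)
  qed (use prob sub monoF u_meas u_sq alpha_meas b01 bsq in auto)
  define c where "c N k s' \<omega> = \<gamma> * clip (real N) (Max (range (fst (acdq_tables \<gamma> QA0 QB0 S Rw \<alpha> aK k \<omega>) s')))"
    for N :: nat and k s' \<omega>
  define \<xi> where "\<xi> N k \<omega> = (\<Sum>s'\<in>UNIV. c N k s' \<omega> * ge s' (S k \<omega>) (A k \<omega>) (X k \<omega>))" for N k \<omega>
  have cm: "c N k s' \<in> borel_measurable (F k)" for N k s'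
  proof -
    have "(\<lambda>\<omega>. Max (range (fst (acdq_tables \<gamma> QA0 QB0 S Rw \<alpha> aK k \<omega>) s'))) \<in> borel_measurable (F k)"
      using borel_measurable_Max[of UNIV "\<lambda>a \<omega>. fst (acdq_tables \<gamma> QA0 QB0 S Rw \<alpha> aK k \<omega>) s' a" "F k"] TM[of k] by simp
    then show ?thesis unfolding c_def[abs_def] clip_def by measurable
  qed
  have cb: "\<bar>c N k s' \<omega>\<bar> \<le> real N" for N k s' \<omega>
  proof -
    have "\<bar>clip (real N) (Max (range (fst (acdq_tables \<gamma> QA0 QB0 S Rw \<alpha> aK k \<omega>) s')))\<bar> \<le> real N"
      by (auto simp: clip_def)
    moreover have "\<bar>\<gamma>\<bar> \<le> 1" using gamma by simp
    ultimately have "\<bar>\<gamma>\<bar> * \<bar>clip (real N) (Max (range (fst (acdq_tables \<gamma> QA0 QB0 S Rw \<alpha> aK k \<omega>) s')))\<bar> \<le> 1 * real N"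
      by (intro mult_mono) auto
    then show ?thesis by (simp add: c_def abs_mult)
  qed
  note zf = zeta_facts[OF cm cb]
  have AV: "AE \<omega> in M. summable (\<lambda>k. \<alpha> k s a \<omega> * \<xi> N k \<omega>)" for N s a
  proof (rule mart_summable[where G=F and C="(real N * real CARD('s))\<^sup>2"])
    show "\<And>k. \<xi> N k \<in> borel_measurable (F (Suc k))" unfolding \<xi>_def by (rule zf(1))
    show "\<And>k. integrable M (\<lambda>\<omega>. (\<xi> N k \<omega>)\<^sup>2)" unfolding \<xi>_def by (rule zf(3))
    show "\<And>k \<eta>. \<eta> \<in> borel_measurable (F k) \<Longrightarrow> integrable M (\<lambda>\<omega>. (\<eta> \<omega>)\<^sup>2) \<Longrightarrow> (\<integral>\<omega>. \<eta> \<omega> * \<xi> N k \<omega> \<partial>M) = 0"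
      unfolding \<xi>_def by (rule zf(4))
    show "\<And>k \<eta>. \<eta> \<in> borel_measurable (F k) \<Longrightarrow> (\<And>\<omega>. 0 \<le> \<eta> \<omega>) \<Longrightarrow> (\<And>\<omega>. \<eta> \<omega> \<le> 1) \<Longrightarrow>
        (\<integral>\<omega>. \<eta> \<omega> * (\<xi> N k \<omega>)\<^sup>2 \<partial>M) \<le> (real N * real CARD('s))\<^sup>2 * (\<integral>\<omega>. \<eta> \<omega> \<partial>M)"
      unfolding \<xi>_def by (rule zf(5))
  qed (use prob sub monoF alpha_meas b01 bsq in auto)
  have AU': "AE \<omega> in M. \<forall>s a. summable (\<lambda>k. \<alpha> k s a \<omega> * u k \<omega>)"
    using AU by (simp add: AE_all_countable)
  have AV': "AE \<omega> in M. \<forall>N s a. summable (\<lambda>k. \<alpha> k s a \<omega> * \<xi> N k \<omega>)"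
    using AV by (simp add: AE_all_countable)
  show ?thesis
    using AU' AV' alpha_range alpha_zero alpha_sum AE_space
  proof eventually_elim
    case (elim \<omega>)
    note om = elim(6)
    define QA where "QA t = fst (acdq_tables \<gamma> QA0 QB0 S Rw \<alpha> aK t \<omega>)" for t
    define QB where "QB t = snd (acdq_tables \<gamma> QA0 QB0 S Rw \<alpha> aK t \<omega>)" for t
    define y where "y t = Rw t \<omega> + \<gamma> * min (QB t (S (Suc t) \<omega>) (aK t \<omega>)) (Max (range (QA t (S (Suc t) \<omega>))))" for t
    have a0: "\<And>t s a. 0 \<le> \<alpha> t s a \<omega>" and a1: "\<And>t s a. \<alpha> t s a \<omega> \<le> 1" using elim(3) by auto
    have ans: "\<And>s a. \<not> summable (\<lambda>t. \<alpha> t s a \<omega>)" using elim(5) by auto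
    have conv: "(\<lambda>t. QA t s a) \<longlonglongrightarrow> Qstar s a \<and> (\<lambda>t. QB t s a) \<longlonglongrightarrow> Qstar s a" for s a
    proof (rule pathwise[where \<alpha>="\<lambda>t s a. \<alpha> t s a \<omega>" and S="\<lambda>t. S t \<omega>" and A="\<lambda>t. A t \<omega>"
          and r="\<lambda>t. Rw t \<omega>" and y=y and k="\<lambda>t. aK t \<omega>" and R="exp_reward Kr" and P="trans_prob Kr" and K=K])
      show "0 \<le> \<gamma>" "\<gamma> < 1" "1 \<le> K" using gamma K by auto
      show "\<And>t s a. 0 \<le> \<alpha> t s a \<omega>" "\<And>t s a. \<alpha> t s a \<omega> \<le> 1" by (rule a0, rule a1)
      show "\<And>t s a. (s, a) \<noteq> (S t \<omega>, A t \<omega>) \<Longrightarrow> \<alpha> t s a \<omega> = 0" using elim(4) by blast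
      show "\<And>s a. \<not> summable (\<lambda>t. \<alpha> t s a \<omega>)" by (rule ans)
      show "\<And>t. y t = Rw t \<omega> + \<gamma> * min (QB t (S (Suc t) \<omega>) (aK t \<omega>)) (Max (range (QA t (S (Suc t) \<omega>))))"
        by (simp add: y_def)
      show "\<And>t s a. QA (Suc t) s a = QA t s a + \<alpha> t s a \<omega> * (y t - QA t s a)"
        by (simp add: QA_def QB_def y_def Let_def)
      show "\<And>t s a. QB (Suc t) s a = QB t s a + \<alpha> t s a \<omega> * (y t - QB t s a)"
        by (simp add: QA_def QB_def y_def Let_def)
      show "\<And>t. aK t \<omega> \<in> topK K (QB t (S (Suc t) \<omega>))"
        using aK_sel[OF om] by (simp add: QA_def QB_def Let_def)
      show "\<And>t. \<forall>b\<in>topK K (QB t (S (Suc t) \<omega>)). QA t (S (Suc t) \<omega>) b \<le> QA t (S (Suc t) \<omega>) (aK t \<omega>)"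
        using aK_sel[OF om] by (simp add: QA_def QB_def Let_def)
      show "\<And>s a s'. 0 \<le> trans_prob Kr s a s'" by (rule trans_nn)
      show "\<And>s a. (\<Sum>s'\<in>UNIV. trans_prob Kr s a s') = 1" by (rule trans_sum)
      show "\<And>s a. Qstar s a = exp_reward Kr s a + \<gamma> * (\<Sum>s'\<in>UNIV. trans_prob Kr s a s' * Max (range (Qstar s')))"
        using Qstar unfolding is_optimal_Q_def by blast
      show "\<And>s a. acc (\<lambda>t. \<alpha> t s a \<omega>) (\<lambda>t. Rw t \<omega> - exp_reward Kr (S t \<omega>) (A t \<omega>)) \<longlonglongrightarrow> 0"
      proof -
        fix s a
        have "acc (\<lambda>t. \<alpha> t s a \<omega>) (\<lambda>t. u t \<omega>) \<longlonglongrightarrow> 0"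
          by (rule acc_kronecker) (use a0 a1 ans elim(1) in auto)
        then show "acc (\<lambda>t. \<alpha> t s a \<omega>) (\<lambda>t. Rw t \<omega> - exp_reward Kr (S t \<omega>) (A t \<omega>)) \<longlonglongrightarrow> 0"
          by (simp add: u_def)
      qed
      show "\<And>N s a. acc (\<lambda>t. \<alpha> t s a \<omega>) (\<lambda>t. \<gamma> * (clip (real N) (Max (range (QA t (S (Suc t) \<omega>))))
              - (\<Sum>s'\<in>UNIV. trans_prob Kr (S t \<omega>) (A t \<omega>) s' * clip (real N) (Max (range (QA t s')))))) \<longlonglongrightarrow> 0"
      proof -
        fix N :: nat and s a
        have eq: "(\<lambda>t. \<gamma> * (clip (real N) (Max (range (QA t (S (Suc t) \<omega>))))
              - (\<Sum>s'\<in>UNIV. trans_prob Kr (S t \<omega>) (A t \<omega>) s' * clip (real N) (Max (range (QA t s'))))))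
            = (\<lambda>t. \<xi> N t \<omega>)"
        proof (rule ext)
          fix t
          show "\<gamma> * (clip (real N) (Max (range (QA t (S (Suc t) \<omega>))))
              - (\<Sum>s'\<in>UNIV. trans_prob Kr (S t \<omega>) (A t \<omega>) s' * clip (real N) (Max (range (QA t s')))))
            = \<xi> N t \<omega>"
            unfolding \<xi>_def c_def QA_def
            by (rule v_ident[where c="\<lambda>s'. clip (real N) (Max (range (fst (acdq_tables \<gamma> QA0 QB0 S Rw \<alpha> aK t \<omega>) s')))" and t=t and \<omega>=\<omega> and \<gamma>=\<gamma>])
        qed
        have "acc (\<lambda>t. \<alpha> t s a \<omega>) (\<lambda>t. \<xi> N t \<omega>) \<longlonglongrightarrow> 0"
          by (rule acc_kronecker) (use a0 a1 ans elim(2) in auto)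
        then show "acc (\<lambda>t. \<alpha> t s a \<omega>) (\<lambda>t. \<gamma> * (clip (real N) (Max (range (QA t (S (Suc t) \<omega>))))
              - (\<Sum>s'\<in>UNIV. trans_prob Kr (S t \<omega>) (A t \<omega>) s' * clip (real N) (Max (range (QA t s')))))) \<longlonglongrightarrow> 0"
          unfolding eq .
      qed
    qed
    then show ?case by (simp add: QA_def QB_def)
  qed
qed

end
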